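(* Consider the gossip dynamics with stubborn agents and block communication probabilities described in the context (with $0<n_{r1}\le n_1$, $0<n_{r2}\le n_2$, $n_{r1}+n_{r2}<n$, $w_s,w_d>0$, $w_s\neq w_d$, $w_s(n_1^2+n_2^2)+2w_dn_1n_2=1$, and fixed stubborn initial vector $x^s(0)$). Then: (i) $x^r(t)$ converges in distribution to a unique invariant distribution; (ii) for any fixed initial vector $x(0)$, $I-\bar A$ is invertible, $$\lim_{t\to\infty}\mathbb{E}\{x^r(t)\}=(I-\bar A)^{-1}\bar B x^s(0)=:\mathbf{x}^r,$$ and $$\lim_{t\to\infty}\frac1t\sum_{i=0}^{t-1}x^r(i)=\mathbf{x}^r\quad\text{almost surely}.$$
   Context: Agents $\mathcal{V}=\{1,\dots,n\}$, $n=n_1+n_2$, form two communities $\mathcal{V}_1=\{1,\dots,n_1\}$, $\mathcal{V}_2=\{n_1+1,\dots,n\}$; community $k$ consists of $n_{rk}$ regular agents $\mathcal{V}_{rk}$ and $n_{sk}=n_k-n_{rk}$ stubborn agents $\mathcal{V}_{sk}$; $\mathcal{V}_r=\mathcal{V}_{r1}\cup\mathcal{V}_{r2}$, $\mathcal{V}_s=\mathcal{V}_{s1}\cup\mathcal{V}_{s2}$. Let $w_{ij}=w_s$ if $i,j$ are in the same community and $w_{ij}=w_d$ otherwise. For $i,j\in\mathcal{V}$ define $R^{ij}=I-\frac12(\mathbf{e}_i-\mathbf{e}_j)(\mathbf{e}_i-\mathbf{e}_j)^T$ if $i,j\in\mathcal{V}_r$; $R^{ij}=I-\frac12\mathbf{e}_i(\mathbf{e}_i-\mathbf{e}_j)^T$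 if $i\in\mathcal{V}_r,j\in\mathcal{V}_s$; $R^{ij}=I-\frac12\mathbf{e}_j(\mathbf{e}_j-\mathbf{e}_i)^T$ if $i\in\mathcal{V}_s,j\in\mathcal{V}_r$; $R^{ij}=I$ if $i,j\in\mathcal{V}_s$. At each time $t\in\mathbb{N}$, independently of the past, an ordered pair $(i,j)$ is drawn with probability $w_{ij}$ and $R(t)=R^{ij}$; states evolve by $x(t+1)=R(t)x(t)$ from fixed $x(0)$. With $x^r(t)$, $x^s(t)$ the stacked states of regular and stubborn agents, $x^s(t)\equiv x^s(0)$ and $x^r(t+1)=A(t)x^r(t)+B(t)x^s(t)$, where $(A(t)\ B(t))$ are the rows of $R(t)$ indexed by regular agents, columns split into regular ($A(t)$) and stubborn ($B(t)$) agents. $\bar A=\mathbb{E}\{A(t)\}$, $\bar B=\mathbb{E}\{B(t)\}$. *)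

theory Defs
  imports "HOL-Probability.Probability" "HOL-Analysis.Analysis"
begin

text \<open>Agents: the type 'r + 's, where Inl k are the regular agents and Inr k the stubborn ones.
  A community structure is given by the set c1 of agents of community 1 (community 2 is its
  complement).\<close>

fun is_reg :: "'r + 's \<Rightarrow> bool" where
  "is_reg (Inl _) = True"
| "is_reg (Inr _) = False"

definition ev :: "'n::finite \<Rightarrow> real^'n" where
  "ev i = axis i 1"

definition outer :: "real^'n \<Rightarrow> real^'m \<Rightarrow> real^'m^'n" where
  "outer u v = (\<chi> a b. u $ a * v $ b)"

definition Rmat :: "('r::finite + 's::finite) \<Rightarrow> ('r + 's) \<Rightarrow> real^('r + 's)^('r + 's)" where
  "Rmat i j =
     (if is_reg i \<and> is_reg j then mat 1 - (1/2) *\<^sub>R outer (ev i - ev j) (ev i - ev j)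
      else if is_reg i \<and> \<not> is_reg j then mat 1 - (1/2) *\<^sub>R outer (ev i) (ev i - ev j)
      else if \<not> is_reg i \<and> is_reg j then mat 1 - (1/2) *\<^sub>R outer (ev j) (ev j - ev i)
      else mat 1)"

definition wgt :: "'v set \<Rightarrow> real \<Rightarrow> real \<Rightarrow> 'v \<Rightarrow> 'v \<Rightarrow> real" where
  "wgt c1 ws wd i j = (if (i \<in> c1 \<longleftrightarrow> j \<in> c1) then ws else wd)"

definition Amat :: "real^('r::finite + 's::finite)^('r + 's) \<Rightarrow> real^'r^'r" where
  "Amat R = (\<chi> k l. R $ Inl k $ Inl l)"

definition Bmat :: "real^('r::finite + 's::finite)^('r + 's) \<Rightarrow> real^'s^'r" where
  "Bmat R = (\<chi> k l. R $ Inl k $ Inr l)"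

definition reg_part :: "real^('r::finite + 's::finite) \<Rightarrow> real^'r" where
  "reg_part x = (\<chi> k. x $ Inl k)"

definition stub_part :: "real^('r::finite + 's::finite) \<Rightarrow> real^'s" where
  "stub_part x = (\<chi> k. x $ Inr k)"

fun xproc :: "real^('r::finite + 's::finite) \<Rightarrow> (('r + 's) \<times> ('r + 's)) stream \<Rightarrow> nat \<Rightarrow> real^('r + 's)" where
  "xproc x0 \<omega> 0 = x0"
| "xproc x0 \<omega> (Suc t) = Rmat (fst (\<omega> !! t)) (snd (\<omega> !! t)) *v xproc x0 \<omega> t"

definition invariant_distr :: "'p pmf \<Rightarrow> ('p \<Rightarrow> 'x::topological_space \<Rightarrow> 'x) \<Rightarrow> 'x measure \<Rightarrow> bool" where
  "invariant_distr P F \<mu> \<longleftrightarrow> prob_space \<mu> \<and> sets \<mu> = sets borel \<and>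
     (\<forall>S \<in> sets borel. emeasure \<mu> S = (\<integral>\<^sup>+ y. emeasure (measure_pmf P) {p. F p y \<in> S} \<partial>\<mu>))"

definition conv_in_distr :: "'a measure \<Rightarrow> (nat \<Rightarrow> 'a \<Rightarrow> 'x::topological_space) \<Rightarrow> 'x measure \<Rightarrow> bool" where
  "conv_in_distr M X \<mu> \<longleftrightarrow>
     (\<forall>f :: 'x \<Rightarrow> real. continuous_on UNIV f \<and> bounded (range f) \<longrightarrow>
        (\<lambda>t. \<integral>\<omega>. f (X t \<omega>) \<partial>M) \<longlonglongrightarrow> (\<integral>y. f y \<partial>\<mu>))"

end

theory Submission
  imports Defs
begin

lemma (in prob_space) integral_stream_space:
  fixes f :: "_ \<Rightarrow> 'b::{banach, second_countable_topology}"
  assumes f[measurable]: "f \<in> borel_measurable (stream_space M)"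
    and int: "integrable (stream_space M) f"
  shows "(\<integral>X. f X \<partial>stream_space M) = (\<integral>x. (\<integral>X. f (x ## X) \<partial>stream_space M) \<partial>M)"
proof -
  interpret S: sequence_space M ..
  interpret P: pair_sigma_finite M "\<Pi>\<^sub>M i::nat\<in>UNIV. M" ..
  have i1: "integrable S.S (\<lambda>X. f (to_stream X))"
    using int by (subst (asm) stream_space_eq_distr) (simp add: integrable_distr_eq)
  have i2: "integrable (M \<Otimes>\<^sub>M S.S) (\<lambda>X. f (to_stream ((\<lambda>(s, \<omega>). case_nat s \<omega>) X)))"
    using i1 by (subst (asm) S.PiM_iter[symmetric]) (simp add: integrable_distr_eq)
  have "(\<integral>X. f X \<partial>stream_space M) = (\<integral>X. f (to_stream X) \<partial>S.S)"
    by (subst stream_space_eq_distr) (simp add: integral_distr)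
  also have "\<dots> = (\<integral>X. f (to_stream ((\<lambda>(s, \<omega>). case_nat s \<omega>) X)) \<partial>(M \<Otimes>\<^sub>M S.S))"
    by (subst S.PiM_iter[symmetric]) (simp add: integral_distr)
  also have "\<dots> = (\<integral>x. \<integral>X. f (to_stream ((\<lambda>(s, \<omega>). case_nat s \<omega>) (x, X))) \<partial>S.S \<partial>M)"
    by (subst P.integral_fst'[OF i2]) simp
  also have "\<dots> = (\<integral>x. \<integral>X. f (x ## to_stream X) \<partial>S.S \<partial>M)"
    by (auto intro!: Bochner_Integration.integral_cong simp: to_stream_nat_case)
  also have "\<dots> = (\<integral>x. \<integral>X. f (x ## X) \<partial>stream_space M \<partial>M)"
    by (subst stream_space_eq_distr)
       (simp add: integral_distr cong: Bochner_Integration.integral_cong)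
  finally show ?thesis .
qed


definition inbox :: "real \<Rightarrow> real^'n \<Rightarrow> bool" where
  "inbox R y \<longleftrightarrow> (\<forall>k. \<bar>y $ k\<bar> \<le> R)"

locale ifs =
  fixes P :: "'p::finite pmf" and A :: "'p \<Rightarrow> real^'n::finite^'n" and c :: "'p \<Rightarrow> real^'n"
    and R0 :: real and \<rho> :: real
  assumes A_nonneg: "\<And>p k l. A p $ k $ l \<ge> 0"
    and A_rowsum: "\<And>p k. (\<Sum>l\<in>UNIV. A p $ k $ l) \<le> 1"
    and c_bound: "\<And>p k. \<bar>c p $ k\<bar> \<le> (1 - (\<Sum>l\<in>UNIV. A p $ k $ l)) * R0"
    and R0_nonneg: "R0 \<ge> 0"
    and rho_lt1: "\<rho> < 1"
    and Abar_rowsum: "\<And>k. (\<Sum>p\<in>UNIV. pmf P p * (\<Sum>l\<in>UNIV. A p $ k $ l)) \<le> \<rho>"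
begin

definition F :: "'p \<Rightarrow> real^'n \<Rightarrow> real^'n" where
  "F p y = A p *v y + c p"

definition Om :: "'p stream measure" where
  "Om = stream_space (measure_pmf P)"

definition Abar :: "real^'n^'n" where
  "Abar = (\<Sum>p\<in>UNIV. pmf P p *\<^sub>R A p)"

definition cbar :: "real^'n" where
  "cbar = (\<Sum>p\<in>UNIV. pmf P p *\<^sub>R c p)"

fun fwd :: "nat \<Rightarrow> real^'n \<Rightarrow> 'p stream \<Rightarrow> real^'n" where
  "fwd 0 y \<omega> = y"
| "fwd (Suc t) y \<omega> = fwd t (F (shd \<omega>) y) (stl \<omega>)"

fun bwd :: "nat \<Rightarrow> real^'n \<Rightarrow> 'p stream \<Rightarrow> real^'n" where
  "bwd 0 y \<omega> = y"
| "bwd (Suc t) y \<omega> = F (shd \<omega>) (bwd t y (stl \<omega>))"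

definition K :: "(real^'n \<Rightarrow> real) \<Rightarrow> real^'n \<Rightarrow> real" where
  "K g y = (\<Sum>p\<in>UNIV. pmf P p * g (F p y))"

lemma prob_Om: "prob_space Om"
  unfolding Om_def by (rule prob_space.prob_space_stream_space) (rule prob_space_measure_pmf)

lemma space_Om[simp]: "space Om = UNIV"
  by (simp add: Om_def space_stream_space)

lemma sum_pmf: "(\<Sum>p\<in>UNIV. pmf P p) = 1"
  using sum_pmf_eq_1[of UNIV P] by simp

lemma shd_meas: "shd \<in> measurable Om (count_space UNIV)"
proof -
  have "shd \<in> measurable Om (measure_pmf P)" unfolding Om_def by measurable
  then show ?thesis by (simp add: measurable_def)
qed

lemma snth_meas: "(\<lambda>\<omega>. \<omega> !! n) \<in> measurable Om (count_space UNIV)"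
proof -
  have "(\<lambda>\<omega>. \<omega> !! n) \<in> measurable Om (measure_pmf P)" unfolding Om_def by measurable
  then show ?thesis by (simp add: measurable_def)
qed

lemma stl_meas: "stl \<in> measurable Om Om"
  unfolding Om_def by measurable

lemma meas_by_shd:
  assumes "\<And>p. (\<lambda>\<omega>. f p \<omega>) \<in> measurable Om N"
  shows "(\<lambda>\<omega>. f (shd \<omega>) \<omega>) \<in> measurable Om N"
  by (rule measurable_compose_countable'[OF assms shd_meas]) auto

lemma meas_by_snth:
  assumes "\<And>p. (\<lambda>\<omega>. f p \<omega>) \<in> measurable Om N"
  shows "(\<lambda>\<omega>. f (\<omega> !! n) \<omega>) \<in> measurable Om N"
  by (rule measurable_compose_countable'[OF assms snth_meas]) auto

lemma F_cont: "continuous_on UNIV (F p)"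
proof -
  have "F p = (\<lambda>y. A p *v y + c p)" by (auto simp: F_def)
  then show ?thesis by (simp add: continuous_on_add continuous_on_const matrix_vector_mult_linear_continuous_on)
qed

lemma F_meas[measurable]: "F p \<in> borel_measurable borel"
  by (rule borel_measurable_continuous_onI[OF F_cont])

lemma fwd_meas: "(\<lambda>\<omega>. fwd t y \<omega>) \<in> borel_measurable Om"
proof (induction t arbitrary: y)
  case 0 then show ?case by simp
next
  case (Suc t)
  have "(\<lambda>\<omega>. fwd t (F p y) (stl \<omega>)) \<in> borel_measurable Om" for p
    using measurable_compose[OF stl_meas Suc] .
  then show ?case using meas_by_shd[where f="\<lambda>p \<omega>. fwd t (F p y) (stl \<omega>)"] by simp
qed

lemma bwd_meas: "(\<lambda>\<omega>. bwd t y \<omega>) \<in> borel_measurable Om"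
proof (induction t)
  case 0 then show ?case by simp
next
  case (Suc t)
  have "(\<lambda>\<omega>. F p (bwd t y (stl \<omega>))) \<in> borel_measurable Om" for p
    using measurable_compose[OF measurable_compose[OF stl_meas Suc] F_meas] .
  then show ?case using meas_by_shd[where f="\<lambda>p \<omega>. F p (bwd t y (stl \<omega>))"] by simp
qed

lemma HD:
  fixes f :: "'p stream \<Rightarrow> 'b::{banach, second_countable_topology}"
  assumes f: "f \<in> borel_measurable Om" and int: "integrable Om f"
  shows "(\<integral>X. f X \<partial>Om) = (\<Sum>p\<in>UNIV. pmf P p *\<^sub>R (\<integral>X. f (p ## X) \<partial>Om))"
proof -
  interpret prob_space "measure_pmf P" by (rule prob_space_measure_pmf)
  have "(\<integral>X. f X \<partial>Om) = (\<integral>x. (\<integral>X. f (x ## X) \<partial>Om) \<partial>measure_pmf P)"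
    using prob_space.integral_stream_space[OF prob_space_measure_pmf, of f P] f int unfolding Om_def by simp
  also have "\<dots> = (\<Sum>p\<in>UNIV. pmf P p *\<^sub>R (\<integral>X. f (p ## X) \<partial>Om))"
    by (rule integral_measure_pmf) auto
  finally show ?thesis .
qed

lemma bounded_integrable:
  fixes f :: "'p stream \<Rightarrow> 'b::{banach, second_countable_topology}"
  assumes "f \<in> borel_measurable Om" "\<And>\<omega>. norm (f \<omega>) \<le> B"
  shows "integrable Om f"
proof -
  interpret prob_space Om by (rule prob_Om)
  show ?thesis using assms by (intro integrable_const_bound[where B=B]) auto
qed

lemma Stream_meas:
  assumes "f \<in> measurable Om N"
  shows "(\<lambda>X. f (p ## X)) \<in> measurable Om N"
proof -
  have "(\<lambda>X. p ## X) \<in> measurable Om Om" unfolding Om_def by measurable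
  then show ?thesis using assms by (rule measurable_compose)
qed

end

context ifs begin

lemma prob_Om_UNIV: "measure Om UNIV = 1"
  using prob_space.prob_space[OF prob_Om] by simp

lemma Av_abs: "\<bar>(A p *v v) $ k\<bar> \<le> (\<Sum>l\<in>UNIV. A p $ k $ l * \<bar>v $ l\<bar>)"
proof -
  have "\<bar>(A p *v v) $ k\<bar> = \<bar>\<Sum>l\<in>UNIV. A p $ k $ l * v $ l\<bar>"
    by (simp add: matrix_vector_mult_def)
  also have "\<dots> \<le> (\<Sum>l\<in>UNIV. \<bar>A p $ k $ l * v $ l\<bar>)" by (rule sum_abs)
  also have "\<dots> = (\<Sum>l\<in>UNIV. A p $ k $ l * \<bar>v $ l\<bar>)"
    using A_nonneg by (simp add: abs_mult)
  finally show ?thesis .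
qed

lemma Av_box: "inbox r v \<Longrightarrow> \<bar>(A p *v v) $ k\<bar> \<le> (\<Sum>l\<in>UNIV. A p $ k $ l) * r"
proof -
  assume "inbox r v"
  then have "(\<Sum>l\<in>UNIV. A p $ k $ l * \<bar>v $ l\<bar>) \<le> (\<Sum>l\<in>UNIV. A p $ k $ l * r)"
    by (intro sum_mono mult_left_mono) (auto simp: inbox_def A_nonneg)
  then show ?thesis using Av_abs[of p v k] by (simp add: sum_distrib_right)
qed

lemma F_box: assumes "R0 \<le> R" "inbox R y" shows "inbox R (F p y)"
  unfolding inbox_def
proof
  fix k
  let ?s = "\<Sum>l\<in>UNIV. A p $ k $ l"
  have "\<bar>F p y $ k\<bar> \<le> \<bar>(A p *v y) $ k\<bar> + \<bar>c p $ k\<bar>" by (simp add: F_def abs_triangle_ineq)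
  also have "\<dots> \<le> ?s * R + (1 - ?s) * R0" using Av_box[OF assms(2)] c_bound by (intro add_mono) auto
  also have "\<dots> \<le> ?s * R + (1 - ?s) * R" using A_rowsum[of p k] assms(1) by (simp add: mult_left_mono)
  finally show "\<bar>F p y $ k\<bar> \<le> R" by (simp add: algebra_simps)
qed

lemma fwd_box: "R0 \<le> R \<Longrightarrow> inbox R y \<Longrightarrow> inbox R (fwd t y \<omega>)"
  by (induction t arbitrary: y \<omega>) (auto simp: F_box)

lemma bwd_box: "R0 \<le> R \<Longrightarrow> inbox R y \<Longrightarrow> inbox R (bwd t y \<omega>)"
  by (induction t arbitrary: \<omega>) (auto simp: F_box)

lemma K_meas: "g \<in> borel_measurable borel \<Longrightarrow> K g \<in> borel_measurable borel"
  unfolding K_def[abs_def]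
  by (intro borel_measurable_sum borel_measurable_times measurable_const) (auto intro: measurable_compose[OF F_meas])

lemma K_bound: assumes "\<And>y. \<bar>g y\<bar> \<le> B" shows "\<bar>K g y\<bar> \<le> B"
proof -
  have "\<bar>K g y\<bar> \<le> (\<Sum>p\<in>UNIV. \<bar>pmf P p * g (F p y)\<bar>)" unfolding K_def by (rule sum_abs)
  also have "\<dots> \<le> (\<Sum>p\<in>UNIV. pmf P p * B)"
    by (intro sum_mono) (auto simp: abs_mult intro: mult_left_mono assms)
  also have "\<dots> = B" by (simp add: sum_distrib_right[symmetric] sum_pmf)
  finally show ?thesis .
qed

lemma Kpow_meas: "g \<in> borel_measurable borel \<Longrightarrow> (K^^t) g \<in> borel_measurable borel"
  by (induction t) (auto simp: K_meas)

lemma Kpow_bound: "(\<And>y. \<bar>g y\<bar> \<le> B) \<Longrightarrow> \<bar>(K^^t) g y\<bar> \<le> B"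
  by (induction t arbitrary: y) (auto intro: K_bound)

lemma comp_bounded_integrable:
  fixes g :: "real^'n \<Rightarrow> real"
  assumes g: "g \<in> borel_measurable borel" "\<And>y. \<bar>g y\<bar> \<le> B"
    and h: "h \<in> borel_measurable Om"
  shows "integrable Om (\<lambda>\<omega>. g (h \<omega>))"
  by (rule bounded_integrable[where B=B]) (use g h in auto)

lemma E_fwd:
  fixes g :: "real^'n \<Rightarrow> real"
  assumes g: "g \<in> borel_measurable borel" "\<And>y. \<bar>g y\<bar> \<le> B"
  shows "(\<integral>\<omega>. g (fwd t y \<omega>) \<partial>Om) = (K^^t) g y"
proof (induction t arbitrary: y)
  case 0
  interpret prob_space Om by (rule prob_Om)
  show ?case using prob_Om_UNIV by simp
next
  case (Suc t)
  have "(\<integral>\<omega>. g (fwd (Suc t) y \<omega>) \<partial>Om) = (\<Sum>p\<in>UNIV. pmf P p *\<^sub>R (\<integral>X. g (fwd (Suc t) y (p ## X)) \<partial>Om))"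
    by (rule HD[OF measurable_compose[OF fwd_meas g(1)] comp_bounded_integrable[OF g fwd_meas]])
  also have "\<dots> = (\<Sum>p\<in>UNIV. pmf P p * (K^^t) g (F p y))" using Suc by simp
  also have "\<dots> = (K^^Suc t) g y" by (simp add: K_def)
  finally show ?case .
qed

lemma E_bwd:
  fixes g :: "real^'n \<Rightarrow> real"
  assumes "g \<in> borel_measurable borel" "\<And>y. \<bar>g y\<bar> \<le> B"
  shows "(\<integral>\<omega>. g (bwd t y \<omega>) \<partial>Om) = (K^^t) g y"
  using assms
proof (induction t arbitrary: g B)
  case 0
  interpret prob_space Om by (rule prob_Om)
  show ?case using prob_Om_UNIV by simp
next
  case (Suc t)
  note g = Suc.prems
  have gF: "(\<lambda>y. g (F p y)) \<in> borel_measurable borel" for p using g(1) by measurable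
  have "(\<integral>\<omega>. g (bwd (Suc t) y \<omega>) \<partial>Om) = (\<Sum>p\<in>UNIV. pmf P p *\<^sub>R (\<integral>X. g (bwd (Suc t) y (p ## X)) \<partial>Om))"
    by (rule HD[OF measurable_compose[OF bwd_meas g(1)] comp_bounded_integrable[OF g bwd_meas]])
  also have "\<dots> = (\<Sum>p\<in>UNIV. (\<integral>X. pmf P p * g (F p (bwd t y X)) \<partial>Om))" by simp
  also have "\<dots> = (\<integral>X. (\<Sum>p\<in>UNIV. pmf P p * g (F p (bwd t y X))) \<partial>Om)"
  proof -
    have "integrable Om (\<lambda>X. pmf P p * g (F p (bwd t y X)))" for p
      by (intro integrable_mult_right comp_bounded_integrable[OF gF g(2)] bwd_meas)
    then show ?thesis using Bochner_Integration.integral_sum[where I=UNIV and M=Om and f="\<lambda>p X. pmf P p * g (F p (bwd t y X))"] by simp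
  qed
  also have "\<dots> = (\<integral>X. K g (bwd t y X) \<partial>Om)" by (simp add: K_def)
  also have "\<dots> = (K^^t) (K g) y"
    by (rule Suc.IH[OF K_meas[OF g(1)] K_bound[OF g(2)]])
  also have "\<dots> = (K^^Suc t) g y" by (simp add: funpow_Suc_right del: funpow.simps)
  finally show ?case .
qed

end

lemma meas_vec_nth[measurable (raw)]:
  "f \<in> borel_measurable M \<Longrightarrow> (\<lambda>x. (f x :: real^'n) $ k) \<in> borel_measurable M"
  by (rule measurable_compose[OF _ borel_measurable_continuous_onI]) (auto intro: continuous_intros)

context ifs begin

fun u :: "nat \<Rightarrow> 'p stream \<Rightarrow> real^'n" where
  "u 0 \<omega> = (\<chi> k. 1)"
| "u (Suc t) \<omega> = A (shd \<omega>) *v u t (stl \<omega>)"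

lemma rho_nonneg: "0 \<le> \<rho>"
proof -
  obtain k :: 'n where True by simp
  have "0 \<le> (\<Sum>p\<in>UNIV. pmf P p * (\<Sum>l\<in>UNIV. A p $ k $ l))"
    by (intro sum_nonneg mult_nonneg_nonneg sum_nonneg) (auto simp: A_nonneg)
  then show ?thesis using Abar_rowsum[of k] by linarith
qed

lemma u_nonneg: "0 \<le> u t \<omega> $ k"
  by (induction t arbitrary: \<omega> k)
     (auto simp: matrix_vector_mult_def intro!: sum_nonneg mult_nonneg_nonneg A_nonneg)

lemma u_le1: "u t \<omega> $ k \<le> 1"
proof (induction t arbitrary: \<omega> k)
  case 0 then show ?case by simp
next
  case (Suc t)
  have "(A (shd \<omega>) *v u t (stl \<omega>)) $ k = (\<Sum>l\<in>UNIV. A (shd \<omega>) $ k $ l * u t (stl \<omega>) $ l)"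
    by (simp add: matrix_vector_mult_def)
  also have "\<dots> \<le> (\<Sum>l\<in>UNIV. A (shd \<omega>) $ k $ l * 1)"
    by (intro sum_mono mult_left_mono Suc A_nonneg)
  also have "\<dots> \<le> 1" using A_rowsum by simp
  finally show ?case by simp
qed

lemma u_meas: "(\<lambda>\<omega>. u t \<omega>) \<in> borel_measurable Om"
proof (induction t)
  case 0 then show ?case by simp
next
  case (Suc t)
  have "(\<lambda>\<omega>. A p *v u t (stl \<omega>)) \<in> borel_measurable Om" for p
    by (rule measurable_compose[OF measurable_compose[OF stl_meas Suc]])
       (rule borel_measurable_continuous_onI, intro continuous_intros)
  then show ?case using meas_by_shd[where f="\<lambda>p \<omega>. A p *v u t (stl \<omega>)"] by simp
qed

lemma u_int: "integrable Om (\<lambda>\<omega>. u t \<omega> $ k)"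
  by (rule bounded_integrable[where B=1]) (use u_nonneg u_le1 u_meas in auto)

lemma E_u: "(\<integral>\<omega>. u t \<omega> $ k \<partial>Om) \<le> \<rho> ^ t"
proof (induction t arbitrary: k)
  case 0
  show ?case using prob_Om_UNIV by simp
next
  case (Suc t)
  have m: "(\<lambda>\<omega>. u (Suc t) \<omega> $ k) \<in> borel_measurable Om" using u_meas by measurable
  have "(\<integral>\<omega>. u (Suc t) \<omega> $ k \<partial>Om) = (\<Sum>p\<in>UNIV. pmf P p *\<^sub>R (\<integral>X. u (Suc t) (p ## X) $ k \<partial>Om))"
    by (rule HD[OF m u_int])
  also have "\<dots> = (\<Sum>p\<in>UNIV. pmf P p * (\<integral>X. (\<Sum>l\<in>UNIV. A p $ k $ l * u t X $ l) \<partial>Om))"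
    by (simp add: matrix_vector_mult_def)
  also have "\<dots> = (\<Sum>p\<in>UNIV. pmf P p * (\<Sum>l\<in>UNIV. A p $ k $ l * (\<integral>X. u t X $ l \<partial>Om)))"
  proof -
    have "(\<integral>X. (\<Sum>l\<in>UNIV. A p $ k $ l * u t X $ l) \<partial>Om) = (\<Sum>l\<in>UNIV. A p $ k $ l * (\<integral>X. u t X $ l \<partial>Om))" for p
      using Bochner_Integration.integral_sum[where I=UNIV and M=Om and f="\<lambda>l X. A p $ k $ l * u t X $ l"]
      by (simp add: u_int)
    then show ?thesis by simp
  qed
  also have "\<dots> \<le> (\<Sum>p\<in>UNIV. pmf P p * (\<Sum>l\<in>UNIV. A p $ k $ l * \<rho> ^ t))"
    by (intro sum_mono mult_left_mono Suc A_nonneg) auto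
  also have "\<dots> = (\<Sum>p\<in>UNIV. pmf P p * (\<Sum>l\<in>UNIV. A p $ k $ l)) * \<rho> ^ t"
    by (simp add: sum_distrib_right sum_distrib_left mult.assoc)
  also have "\<dots> \<le> \<rho> * \<rho> ^ t"
    using Abar_rowsum[of k] by (intro mult_right_mono) (auto simp: rho_nonneg)
  finally show ?case by simp
qed

lemma bwd_diff:
  assumes "inbox r (y - y')"
  shows "\<bar>bwd t y \<omega> $ k - bwd t y' \<omega> $ k\<bar> \<le> u t \<omega> $ k * r"
proof (induction t arbitrary: \<omega> k)
  case 0 then show ?case using assms by (simp add: inbox_def)
next
  case (Suc t)
  let ?v = "bwd t y (stl \<omega>) - bwd t y' (stl \<omega>)"
  have "bwd (Suc t) y \<omega> $ k - bwd (Suc t) y' \<omega> $ k = (A (shd \<omega>) *v ?v) $ k"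
    by (simp add: F_def matrix_vector_mult_diff_distrib)
  also have "\<bar>\<dots>\<bar> \<le> (\<Sum>l\<in>UNIV. A (shd \<omega>) $ k $ l * \<bar>?v $ l\<bar>)" by (rule Av_abs)
  also have "\<dots> \<le> (\<Sum>l\<in>UNIV. A (shd \<omega>) $ k $ l * (u t (stl \<omega>) $ l * r))"
    using Suc by (intro sum_mono mult_left_mono A_nonneg) auto
  also have "\<dots> = u (Suc t) \<omega> $ k * r"
    by (simp add: matrix_vector_mult_def sum_distrib_right mult.assoc)
  finally show ?case .
qed

lemma bwd_tail: "bwd (Suc t) y \<omega> = bwd t (F (\<omega> !! t) y) \<omega>"
  by (induction t arbitrary: \<omega>) auto

lemma c_box: "inbox R0 (c p)"
proof -
  have "\<bar>c p $ k\<bar> \<le> R0" for k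
  proof -
    have "(1 - (\<Sum>l\<in>UNIV. A p $ k $ l)) * R0 \<le> 1 * R0"
      using R0_nonneg by (intro mult_right_mono) (auto intro!: sum_nonneg A_nonneg)
    then show ?thesis using c_bound[of p k] by simp
  qed
  then show ?thesis by (simp add: inbox_def)
qed

end

context ifs begin

definition s :: "nat \<Rightarrow> 'p stream \<Rightarrow> real" where
  "s t \<omega> = (\<Sum>k\<in>UNIV. u t \<omega> $ k)"

lemma s_nonneg: "0 \<le> s t \<omega>"
  unfolding s_def by (intro sum_nonneg u_nonneg)

lemma s_meas: "(\<lambda>\<omega>. s t \<omega>) \<in> borel_measurable Om"
  unfolding s_def using u_meas by measurable

lemma AE_summable: "AE \<omega> in Om. summable (\<lambda>t. s t \<omega>)"
proof -
  have int_s: "integrable Om (\<lambda>\<omega>. s t \<omega>)" for t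
    unfolding s_def by (intro Bochner_Integration.integrable_sum u_int)
  have E_s: "(\<integral>\<omega>. s t \<omega> \<partial>Om) \<le> real CARD('n) * \<rho> ^ t" for t
  proof -
    have "(\<integral>\<omega>. s t \<omega> \<partial>Om) = (\<Sum>k\<in>UNIV. (\<integral>\<omega>. u t \<omega> $ k \<partial>Om))"
      unfolding s_def by (rule Bochner_Integration.integral_sum) (rule u_int)
    also have "\<dots> \<le> (\<Sum>k\<in>(UNIV::'n set). \<rho> ^ t)" by (intro sum_mono E_u)
    finally show ?thesis by simp
  qed
  have "(\<integral>\<^sup>+\<omega>. (\<Sum>t. ennreal (s t \<omega>)) \<partial>Om) = (\<Sum>t. \<integral>\<^sup>+\<omega>. ennreal (s t \<omega>) \<partial>Om)"
    by (rule nn_integral_suminf) (use s_meas in measurable)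
  also have "\<dots> = (\<Sum>t. ennreal (\<integral>\<omega>. s t \<omega> \<partial>Om))"
    by (intro suminf_cong nn_integral_eq_integral int_s) (auto simp: s_nonneg)
  also have "\<dots> \<le> (\<Sum>t. ennreal (real CARD('n) * \<rho> ^ t))"
    by (intro suminf_le summableI) (auto intro: ennreal_leI E_s)
  also have "\<dots> = ennreal (\<Sum>t. real CARD('n) * \<rho> ^ t)"
    by (rule suminf_ennreal2) (auto simp: rho_nonneg rho_lt1 intro!: summable_mult summable_geometric)
  also have "\<dots> < \<infinity>" by simp
  finally have "(\<integral>\<^sup>+\<omega>. (\<Sum>t. ennreal (s t \<omega>)) \<partial>Om) \<noteq> \<infinity>" by simp
  then have "AE \<omega> in Om. (\<Sum>t. ennreal (s t \<omega>)) \<noteq> \<infinity>"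
    by (intro nn_integral_PInf_AE) (use s_meas in measurable)
  then show ?thesis
    by eventually_elim (rule summable_suminf_not_top[OF s_nonneg], simp add: infinity_ennreal_def)
qed

definition Yinf :: "'p stream \<Rightarrow> real^'n" where
  "Yinf \<omega> = lim (\<lambda>t. bwd t 0 \<omega>)"

lemma Yinf_meas: "Yinf \<in> borel_measurable Om"
  unfolding Yinf_def by (intro borel_measurable_lim_metric bwd_meas)

lemma u_summable:
  assumes "summable (\<lambda>t. s t \<omega>)" shows "summable (\<lambda>t. u t \<omega> $ k)"
proof (rule summable_comparison_test'[OF assms])
  fix t
  have "u t \<omega> $ k \<le> s t \<omega>"
    unfolding s_def by (rule member_le_sum) (auto intro: u_nonneg)
  then show "norm (u t \<omega> $ k) \<le> s t \<omega>" using u_nonneg by simp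
qed

lemma bwd_conv:
  assumes sm: "summable (\<lambda>t. s t \<omega>)"
  shows "(\<lambda>t. bwd t y \<omega>) \<longlonglongrightarrow> Yinf \<omega>"
proof -
  define d where "d k i = bwd (Suc i) 0 \<omega> $ k - bwd i 0 \<omega> $ k" for k i
  have dk: "\<bar>d k i\<bar> \<le> u i \<omega> $ k * R0" for k i
  proof -
    have "inbox R0 (F (\<omega> !! i) 0 - 0)" using c_box by (simp add: F_def)
    from bwd_diff[OF this, of i \<omega> k] show ?thesis unfolding d_def bwd_tail .
  qed
  have "summable (d k)" for k
    by (rule summable_rabs_cancel, rule summable_comparison_test'[where g="\<lambda>i. u i \<omega> $ k * R0"])
       (auto intro: dk summable_mult2 u_summable[OF sm])
  then have "(\<lambda>t. \<Sum>i<t. d k i) \<longlonglongrightarrow> suminf (d k)" for k by (rule summable_LIMSEQ)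
  moreover have "(\<Sum>i<t. d k i) = bwd t 0 \<omega> $ k" for k t
    unfolding d_def by (subst sum_lessThan_telescope) simp
  ultimately have "(\<lambda>t. bwd t 0 \<omega> $ k) \<longlonglongrightarrow> suminf (d k)" for k by simp
  then have c0: "(\<lambda>t. bwd t 0 \<omega>) \<longlonglongrightarrow> (\<chi> k. suminf (d k))"
    by (intro vec_tendstoI) simp
  then have Y: "(\<lambda>t. bwd t 0 \<omega>) \<longlonglongrightarrow> Yinf \<omega>"
    unfolding Yinf_def using limI by (metis convergentI)
  have "(\<lambda>t. bwd t y \<omega> - bwd t 0 \<omega>) \<longlonglongrightarrow> 0"
  proof (rule vec_tendstoI)
    fix k
    have "inbox (norm y) (y - 0)" by (simp add: inbox_def component_le_norm_cart)
    then have b: "\<bar>bwd t y \<omega> $ k - bwd t 0 \<omega> $ k\<bar> \<le> u t \<omega> $ k * norm y" for t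
      by (rule bwd_diff)
    have "(\<lambda>t. u t \<omega> $ k * norm y) \<longlonglongrightarrow> 0 * norm y"
      by (intro tendsto_mult tendsto_const summable_LIMSEQ_zero u_summable[OF sm])
    then show "(\<lambda>t. (bwd t y \<omega> - bwd t 0 \<omega>) $ k) \<longlonglongrightarrow> 0 $ k"
      using b by (auto intro: Lim_null_comparison[where g="\<lambda>t. u t \<omega> $ k * norm y"])
  qed
  from tendsto_add[OF this Y] show ?thesis by simp
qed

lemma AE_bwd_conv: "AE \<omega> in Om. \<forall>y. (\<lambda>t. bwd t y \<omega>) \<longlonglongrightarrow> Yinf \<omega>"
  using AE_summable by eventually_elim (auto intro: bwd_conv)

end

lemma closed_approx_tendsto:
  fixes C :: "'a::metric_space set"
  assumes "closed C" "C \<noteq> {}"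
  shows "(\<lambda>m. max 0 (1 - real (Suc m) * infdist x C)) \<longlonglongrightarrow> indicator C x"
proof (cases "x \<in> C")
  case True
  then have "infdist x C = 0" using assms in_closed_iff_infdist_zero by blast
  then show ?thesis using True by simp
next
  case False
  then have d: "infdist x C > 0" using assms in_closed_iff_infdist_zero infdist_nonneg
    by (metis order_neq_le_trans)
  obtain N :: nat where N: "1 / infdist x C < N" using reals_Archimedean2 by blast
  have "eventually (\<lambda>m. max 0 (1 - real (Suc m) * infdist x C) = 0) sequentially"
    unfolding eventually_sequentially
  proof (intro exI allI impI)
    fix m assume "N \<le> m"
    then have "1 / infdist x C < real (Suc m)" using N by linarith
    then have "1 < real (Suc m) * infdist x C" using d by (simp add: field_simps)
    then show "max 0 (1 - real (Suc m) * infdist x C) = 0" by simp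
  qed
  then show ?thesis using False by (simp add: tendsto_eventually)
qed

lemma prob_eq_by_continuous:
  fixes M N :: "'a::metric_space measure"
  assumes M: "prob_space M" "sets M = sets borel"
    and N: "prob_space N" "sets N = sets borel"
    and eq: "\<And>g :: 'a \<Rightarrow> real. continuous_on UNIV g \<Longrightarrow> (\<And>x. 0 \<le> g x \<and> g x \<le> 1) \<Longrightarrow>
               (\<integral>x. g x \<partial>M) = (\<integral>x. g x \<partial>N)"
  shows "M = N"
proof -
  have sb: "sets (borel :: 'a measure) = sigma_sets UNIV (Collect closed)"
    by (simp add: borel_eq_closed)
  have spM: "space M = UNIV" using sets_eq_imp_space_eq[OF M(2)] by simp
  have spN: "space N = UNIV" using sets_eq_imp_space_eq[OF N(2)] by simp
  have cl: "emeasure M C = emeasure N C" if C: "closed C" for C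
  proof (cases "C = {}")
    case True then show ?thesis by simp
  next
    case False
    define g where "g m x = max 0 (1 - real (Suc m) * infdist x C)" for m x
    have gc: "continuous_on UNIV (g m)" for m
      unfolding g_def by (intro continuous_intros)
    have g01: "0 \<le> g m x \<and> g m x \<le> 1" for m x
      unfolding g_def using infdist_nonneg[of x C] by (auto simp: max_def)
    have gm: "g m \<in> borel_measurable L" if "sets L = sets borel" for m and L :: "'a measure"
      using borel_measurable_continuous_onI[OF gc] measurable_cong_sets[OF that refl] by blast
    have Cb: "C \<in> sets borel" using C by (simp add: borel_closed)
    have lim: "(\<lambda>m. \<integral>x. g m x \<partial>L) \<longlonglongrightarrow> measure L C"
      if L: "prob_space L" "sets L = sets borel" for L
    proof -
      interpret prob_space L by (rule L(1))
      have "(\<lambda>m. \<integral>x. g m x \<partial>L) \<longlonglongrightarrow> (\<integral>x. indicator C x \<partial>L)"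
      proof (rule integral_dominated_convergence[where w="\<lambda>_. 1"])
        show "indicator C \<in> borel_measurable L" using Cb L(2) by (simp add: borel_measurable_indicator_iff)
        show "g m \<in> borel_measurable L" for m by (rule gm[OF L(2)])
        show "integrable L (\<lambda>_. 1::real)" by simp
        show "AE x in L. (\<lambda>m. g m x) \<longlonglongrightarrow> indicator C x"
          unfolding g_def using closed_approx_tendsto[OF C False] by simp
        show "AE x in L. norm (g m x) \<le> 1" for m using g01 by simp
      qed
      also have "(\<integral>x. indicator C x \<partial>L) = measure L C"
        using sets_eq_imp_space_eq[OF L(2)] by simp
      finally show ?thesis .
    qed
    have "(\<lambda>m. \<integral>x. g m x \<partial>M) = (\<lambda>m. \<integral>x. g m x \<partial>N)"
      using eq[OF gc g01] by auto
    then have "measure M C = measure N C"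
      using LIMSEQ_unique[OF lim[OF M]] lim[OF N] by metis
    then show ?thesis
      using finite_measure.emeasure_eq_measure[OF prob_space.finite_measure[OF M(1)]] finite_measure.emeasure_eq_measure[OF prob_space.finite_measure[OF N(1)]] by simp
  qed
  show ?thesis
  proof (rule measure_eqI_generator_eq[where E="Collect closed" and \<Omega>=UNIV and A="\<lambda>_. UNIV"])
    show "Int_stable (Collect closed)" by (auto simp: Int_stable_def)
    show "Collect closed \<subseteq> Pow UNIV" by auto
    show "\<And>X. X \<in> Collect closed \<Longrightarrow> emeasure M X = emeasure N X" using cl by auto
    show "sets M = sigma_sets UNIV (Collect closed)" using M(2) sb by simp
    show "sets N = sigma_sets UNIV (Collect closed)" using N(2) sb by simp
    show "range (\<lambda>_. UNIV) \<subseteq> Collect closed" by auto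
    show "(\<Union>i. UNIV) = (UNIV :: 'a set)" by simp
    show "emeasure M UNIV \<noteq> \<infinity>" for i :: nat
      using prob_space.emeasure_space_1[OF M(1)] spM by simp
  qed
qed


context ifs begin

definition mu :: "(real^'n) measure" where
  "mu = distr Om borel Yinf"

lemma prob_mu: "prob_space mu"
  unfolding mu_def by (rule prob_space.prob_space_distr[OF prob_Om Yinf_meas])

lemma sets_mu: "sets mu = sets borel"
  by (simp add: mu_def)

lemma lim_bwd:
  fixes g :: "real^'n \<Rightarrow> real"
  assumes gc: "continuous_on UNIV g" and gb: "\<And>y. \<bar>g y\<bar> \<le> B"
  shows "(\<lambda>t. \<integral>\<omega>. g (bwd t y \<omega>) \<partial>Om) \<longlonglongrightarrow> (\<integral>\<omega>. g (Yinf \<omega>) \<partial>Om)"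
proof -
  interpret prob_space Om by (rule prob_Om)
  have gm: "g \<in> borel_measurable borel" by (rule borel_measurable_continuous_onI[OF gc])
  show ?thesis
  proof (rule integral_dominated_convergence[where w="\<lambda>_. B"])
    show "(\<lambda>\<omega>. g (Yinf \<omega>)) \<in> borel_measurable Om" using measurable_compose[OF Yinf_meas gm] .
    show "(\<lambda>\<omega>. g (bwd t y \<omega>)) \<in> borel_measurable Om" for t using measurable_compose[OF bwd_meas gm] .
    show "integrable Om (\<lambda>_. B)" by simp
    show "AE \<omega> in Om. (\<lambda>t. g (bwd t y \<omega>)) \<longlonglongrightarrow> g (Yinf \<omega>)"
      using AE_bwd_conv
    proof eventually_elim
      case (elim \<omega>)
      then have "(\<lambda>t. bwd t y \<omega>) \<longlonglongrightarrow> Yinf \<omega>" by blast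
      moreover have "isCont g (Yinf \<omega>)" using gc by (simp add: continuous_on_eq_continuous_at)
      ultimately show ?case by (rule isCont_tendsto_compose[rotated])
    qed
    show "AE \<omega> in Om. norm (g (bwd t y \<omega>)) \<le> B" for t using gb by simp
  qed
qed

lemma Kpow_lim:
  fixes g :: "real^'n \<Rightarrow> real"
  assumes gc: "continuous_on UNIV g" and gb: "\<And>y. \<bar>g y\<bar> \<le> B"
  shows "(\<lambda>t. (K^^t) g y) \<longlonglongrightarrow> (\<integral>\<omega>. g (Yinf \<omega>) \<partial>Om)"
proof -
  have gm: "g \<in> borel_measurable borel" by (rule borel_measurable_continuous_onI[OF gc])
  show ?thesis using lim_bwd[OF gc gb, of y] E_bwd[OF gm gb] by simp
qed

lemma integral_mu: "g \<in> borel_measurable borel \<Longrightarrow> (\<integral>y. g y \<partial>mu) = (\<integral>\<omega>. g (Yinf \<omega>) \<partial>Om)"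
  for g :: "real^'n \<Rightarrow> real"
  unfolding mu_def by (rule integral_distr[OF Yinf_meas])

lemma conv_mu: "conv_in_distr Om (\<lambda>t \<omega>. fwd t y \<omega>) mu"
  unfolding conv_in_distr_def
proof (intro allI impI, elim conjE)
  fix f :: "real^'n \<Rightarrow> real"
  assume fc: "continuous_on UNIV f" and fb: "bounded (range f)"
  then obtain B where B: "\<And>y. \<bar>f y\<bar> \<le> B" unfolding bounded_iff by auto
  have fm: "f \<in> borel_measurable borel" by (rule borel_measurable_continuous_onI[OF fc])
  show "(\<lambda>t. \<integral>\<omega>. f (fwd t y \<omega>) \<partial>Om) \<longlonglongrightarrow> (\<integral>y. f y \<partial>mu)"
    using Kpow_lim[OF fc B, of y] E_fwd[OF fm B] integral_mu[OF fm] by simp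
qed

end

context ifs begin

lemma nnP: "(\<integral>\<^sup>+x. G x \<partial>measure_pmf P) = (\<Sum>x\<in>UNIV. ennreal (pmf P x) * G x)"
  by (simp add: nn_integral_measure_pmf nn_integral_count_space_finite)

lemma emeas_P: "emeasure (measure_pmf P) {p. F p y \<in> S} = (\<Sum>p\<in>UNIV. ennreal (pmf P p) * indicator S (F p y))"
proof -
  have "emeasure (measure_pmf P) {p. F p y \<in> S} = (\<integral>\<^sup>+p. indicator {p. F p y \<in> S} p \<partial>measure_pmf P)"
    by simp
  also have "\<dots> = (\<Sum>p\<in>UNIV. ennreal (pmf P p) * indicator S (F p y))"
    unfolding nnP by (intro sum.cong) (auto split: split_indicator)
  finally show ?thesis .
qed

lemma AE_stl:
  assumes "AE \<omega> in Om. Q \<omega>"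
  shows "AE \<omega> in Om. Q (stl \<omega>)"
proof -
  from assms obtain N where N0: "{\<omega> \<in> space Om. \<not> Q \<omega>} \<subseteq> N" "emeasure Om N = 0" and Ns: "N \<in> sets Om"
    by (rule AE_E)
  have N: "{\<omega> \<in> space Om. \<not> Q \<omega>} \<subseteq> N" "N \<in> null_sets Om" using N0 Ns by auto
  have "AE \<omega> in Om. stl \<omega> \<notin> N"
  proof -
    have [measurable]: "N \<in> sets Om" by (rule Ns)
    have [measurable]: "stl \<in> Om \<rightarrow>\<^sub>M Om" by (rule stl_meas)
    have pm: "Measurable.pred Om (\<lambda>\<omega>. stl \<omega> \<notin> N)" by measurable
    have "AE X in Om. X \<notin> N" using N(2) by (rule AE_not_in)
    then show ?thesis
      unfolding Om_def
      by (subst prob_space.AE_stream_space[OF prob_space_measure_pmf])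
         (use pm in \<open>auto simp: Om_def\<close>)
  qed
  then show ?thesis using N(1) by (auto elim!: eventually_mono)
qed

lemma Yinf_step: "AE \<omega> in Om. Yinf \<omega> = F (shd \<omega>) (Yinf (stl \<omega>))"
  using AE_bwd_conv AE_stl[OF AE_bwd_conv]
proof eventually_elim
  case (elim \<omega>)
  have "(\<lambda>t. bwd (Suc t) 0 \<omega>) \<longlonglongrightarrow> Yinf \<omega>"
    using elim(1) by (intro LIMSEQ_Suc) blast
  moreover have "(\<lambda>t. F (shd \<omega>) (bwd t 0 (stl \<omega>))) \<longlonglongrightarrow> F (shd \<omega>) (Yinf (stl \<omega>))"
  proof -
    have "isCont (F (shd \<omega>)) (Yinf (stl \<omega>))" using F_cont by (simp add: continuous_on_eq_continuous_at)
    then show ?thesis by (rule isCont_tendsto_compose[OF _ elim(2)[rule_format, of 0]])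
  qed
  ultimately show ?case by (simp add: LIMSEQ_unique)
qed

lemma Q_meas: "(\<lambda>y. \<Sum>p\<in>UNIV. ennreal (pmf P p) * indicator S (F p y)) \<in> borel_measurable borel"
  if "S \<in> sets borel"
  using that by measurable

lemma invariant_mu: "invariant_distr P F mu"
  unfolding invariant_distr_def
proof (intro conjI prob_mu sets_mu ballI)
  fix S :: "(real^'n) set" assume S: "S \<in> sets borel"
  interpret prob_space "measure_pmf P" by (rule prob_space_measure_pmf)
  have m1: "(\<lambda>\<omega>. indicator S (F (shd \<omega>) (Yinf (stl \<omega>))) :: ennreal) \<in> borel_measurable Om"
  proof -
    have "(\<lambda>\<omega>. indicator S (F p (Yinf (stl \<omega>))) :: ennreal) \<in> borel_measurable Om" for p
      using S measurable_compose[OF stl_meas Yinf_meas] by measurable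
    then show ?thesis using meas_by_shd[where f="\<lambda>p \<omega>. indicator S (F p (Yinf (stl \<omega>))) :: ennreal"] by simp
  qed
  have "emeasure mu S = (\<integral>\<^sup>+y. indicator S y \<partial>mu)"
    using S by (simp add: sets_mu)
  also have "\<dots> = (\<integral>\<^sup>+\<omega>. indicator S (Yinf \<omega>) \<partial>Om)"
    unfolding mu_def using S by (intro nn_integral_distr Yinf_meas) auto
  also have "\<dots> = (\<integral>\<^sup>+\<omega>. indicator S (F (shd \<omega>) (Yinf (stl \<omega>))) \<partial>Om)"
    by (intro nn_integral_cong_AE) (use Yinf_step in \<open>auto elim!: eventually_mono\<close>)
  also have "\<dots> = (\<integral>\<^sup>+x. (\<integral>\<^sup>+X. indicator S (F x (Yinf X)) \<partial>Om) \<partial>measure_pmf P)"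
    using prob_space.nn_integral_stream_space[OF prob_space_measure_pmf, of "\<lambda>\<omega>. indicator S (F (shd \<omega>) (Yinf (stl \<omega>)))"] m1
    unfolding Om_def by simp
  also have "\<dots> = (\<Sum>x\<in>UNIV. ennreal (pmf P x) * (\<integral>\<^sup>+X. indicator S (F x (Yinf X)) \<partial>Om))"
    by (rule nnP)
  also have "\<dots> = (\<integral>\<^sup>+X. (\<Sum>x\<in>UNIV. ennreal (pmf P x) * indicator S (F x (Yinf X))) \<partial>Om)"
  proof -
    have mx: "(\<lambda>X. indicator S (F x (Yinf X)) :: ennreal) \<in> borel_measurable Om" for x
      using S Yinf_meas by measurable
    have mx': "(\<lambda>X. ennreal (pmf P x) * indicator S (F x (Yinf X))) \<in> borel_measurable Om" for x
      using S Yinf_meas by measurable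
    show ?thesis
      by (subst nn_integral_sum) (auto simp: nn_integral_cmult mx mx')
  qed
  also have "\<dots> = (\<integral>\<^sup>+y. (\<Sum>x\<in>UNIV. ennreal (pmf P x) * indicator S (F x y)) \<partial>mu)"
    unfolding mu_def by (rule nn_integral_distr[symmetric]) (use Q_meas[OF S] Yinf_meas in auto)
  also have "\<dots> = (\<integral>\<^sup>+y. emeasure (measure_pmf P) {p. F p y \<in> S} \<partial>mu)"
    by (simp add: emeas_P)
  finally show "emeasure mu S = (\<integral>\<^sup>+y. emeasure (measure_pmf P) {p. F p y \<in> S} \<partial>mu)" .
qed

end

context ifs begin

lemma intP: "(\<integral>p. h p \<partial>measure_pmf P) = (\<Sum>p\<in>UNIV. pmf P p * h p)" for h :: "'p \<Rightarrow> real"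
  by (subst integral_measure_pmf[where A=UNIV]) auto

lemma unique_mu:
  assumes inv: "invariant_distr P F \<nu>"
  shows "\<nu> = mu"
proof -
  have pn: "prob_space \<nu>" and sn: "sets \<nu> = sets borel"
    and em: "\<And>S. S \<in> sets borel \<Longrightarrow> emeasure \<nu> S = (\<integral>\<^sup>+y. emeasure (measure_pmf P) {p. F p y \<in> S} \<partial>\<nu>)"
    using inv unfolding invariant_distr_def by auto
  interpret N: prob_space \<nu> by (rule pn)
  interpret PP: pair_prob_space \<nu> "measure_pmf P"
    by (simp add: pair_prob_space_def pair_sigma_finite_def pn prob_space_measure_pmf
        prob_space_imp_sigma_finite)
  let ?M = "\<nu> \<Otimes>\<^sub>M measure_pmf P"
  define T where "T z = F (snd z) (fst z)" for z :: "(real^'n) \<times> 'p"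
  have Tm: "T \<in> measurable ?M borel"
  proof -
    have sm: "snd \<in> measurable ?M (count_space UNIV)"
      using measurable_snd[of \<nu> "measure_pmf P"] by (simp add: measurable_def)
    have fm: "(\<lambda>z. F i (fst z)) \<in> measurable ?M borel" for i
    proof -
      have "F i \<in> measurable \<nu> borel" by (subst measurable_cong_sets[OF sn refl]) (rule F_meas)
      then show ?thesis by (rule measurable_compose[OF measurable_fst])
    qed
    have "(\<lambda>z. F (snd z) (fst z)) \<in> measurable ?M borel"
      by (rule measurable_compose_countable'[where f="\<lambda>i z. F i (fst z)" and g=snd and I=UNIV, OF fm sm]) simp
    then show ?thesis unfolding T_def[abs_def] .
  qed
  define D where "D = distr ?M borel T"
  have nuD: "\<nu> = D"
  proof (rule measure_eqI)
    show "sets \<nu> = sets D" by (simp add: D_def sn)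
    fix S assume "S \<in> sets \<nu>"
    then have S: "S \<in> sets borel" using sn by simp
    have "emeasure D S = (\<integral>\<^sup>+x. indicator S x \<partial>D)" using S by (simp add: D_def)
    also have "\<dots> = (\<integral>\<^sup>+z. indicator S (T z) \<partial>?M)"
      unfolding D_def using S by (intro nn_integral_distr Tm) auto
    also have "\<dots> = (\<integral>\<^sup>+y. \<integral>\<^sup>+p. indicator S (T (y, p)) \<partial>measure_pmf P \<partial>\<nu>)"
    proof (rule sigma_finite_measure.nn_integral_fst[symmetric])
      show "sigma_finite_measure (measure_pmf P)"
        by (rule prob_space_imp_sigma_finite[OF prob_space_measure_pmf])
      show "(\<lambda>z. indicator S (T z) :: ennreal) \<in> borel_measurable ?M" using Tm S by measurable
    qed
    also have "\<dots> = (\<integral>\<^sup>+y. \<integral>\<^sup>+p. indicator S (F p y) \<partial>measure_pmf P \<partial>\<nu>)"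
      by (simp add: T_def)
    also have "\<dots> = (\<integral>\<^sup>+y. emeasure (measure_pmf P) {p. F p y \<in> S} \<partial>\<nu>)"
      by (simp add: emeas_P nnP)
    also have "\<dots> = emeasure \<nu> S" using em[OF S] by simp
    finally show "emeasure \<nu> S = emeasure D S" by simp
  qed
  have intK: "(\<integral>y. g y \<partial>\<nu>) = (\<integral>y. K g y \<partial>\<nu>)"
    if gm: "g \<in> borel_measurable borel" and gb: "\<And>y. \<bar>g y\<bar> \<le> B" for g :: "real^'n \<Rightarrow> real" and B
  proof -
    have gTm: "(\<lambda>z. g (T z)) \<in> borel_measurable ?M" using measurable_compose[OF Tm gm] .
    have gTi: "integrable ?M (\<lambda>z. g (T z))"
      by (rule PP.integrable_const_bound[where B=B]) (use gTm gb in auto)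
    have "(\<integral>y. g y \<partial>\<nu>) = (\<integral>y. g y \<partial>D)" by (simp only: nuD)
    also have "\<dots> = (\<integral>z. g (T z) \<partial>?M)" unfolding D_def by (rule integral_distr[OF Tm gm])
    also have "\<dots> = (\<integral>y. \<integral>p. g (F p y) \<partial>measure_pmf P \<partial>\<nu>)"
      using PP.integral_fst'[OF gTi] by (simp add: T_def)
    also have "\<dots> = (\<integral>y. K g y \<partial>\<nu>)"
      unfolding K_def by (intro Bochner_Integration.integral_cong refl) (simp add: intP)
    finally show ?thesis .
  qed
  have intKt: "(\<integral>y. g y \<partial>\<nu>) = (\<integral>y. (K^^t) g y \<partial>\<nu>)"
    if "g \<in> borel_measurable borel" "\<And>y. \<bar>g y\<bar> \<le> B" for g :: "real^'n \<Rightarrow> real" and B t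
    using that
  proof (induction t arbitrary: g)
    case 0 then show ?case by simp
  next
    case (Suc t)
    have "(\<integral>y. (K^^Suc t) g y \<partial>\<nu>) = (\<integral>y. (K^^t) (K g) y \<partial>\<nu>)"
      by (simp add: funpow_Suc_right del: funpow.simps)
    also have "\<dots> = (\<integral>y. K g y \<partial>\<nu>)"
      using Suc.IH[OF K_meas[OF Suc.prems(1)] K_bound[OF Suc.prems(2)]] by simp
    also have "\<dots> = (\<integral>y. g y \<partial>\<nu>)" using intK[OF Suc.prems] by simp
    finally show ?case by simp
  qed
  show ?thesis
  proof (rule prob_eq_by_continuous[OF pn sn prob_mu sets_mu])
    fix g :: "real^'n \<Rightarrow> real"
    assume gc: "continuous_on UNIV g" and g01: "\<And>x. 0 \<le> g x \<and> g x \<le> 1"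
    have gb: "\<bar>g y\<bar> \<le> 1" for y using g01[of y] by simp
    have gm: "g \<in> borel_measurable borel" by (rule borel_measurable_continuous_onI[OF gc])
    let ?L = "\<integral>\<omega>. g (Yinf \<omega>) \<partial>Om"
    have "(\<lambda>t. \<integral>y. (K^^t) g y \<partial>\<nu>) \<longlonglongrightarrow> (\<integral>y. ?L \<partial>\<nu>)"
    proof (rule integral_dominated_convergence[where w="\<lambda>_. 1"])
      show "(\<lambda>y. ?L) \<in> borel_measurable \<nu>" by simp
      show "(K^^t) g \<in> borel_measurable \<nu>" for t
        by (subst measurable_cong_sets[OF sn refl]) (rule Kpow_meas[OF gm])
      show "integrable \<nu> (\<lambda>_. 1::real)" by simp
      show "AE y in \<nu>. (\<lambda>t. (K^^t) g y) \<longlonglongrightarrow> ?L" using Kpow_lim[OF gc gb] by simp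
      show "AE y in \<nu>. norm ((K^^t) g y) \<le> 1" for t using Kpow_bound[OF gb] by simp
    qed
    moreover have "(\<lambda>t. \<integral>y. (K^^t) g y \<partial>\<nu>) = (\<lambda>t. \<integral>y. g y \<partial>\<nu>)"
      using intKt[OF gm gb] by simp
    ultimately have "(\<lambda>t. \<integral>y. g y \<partial>\<nu>) \<longlonglongrightarrow> ?L" by (simp add: N.prob_space)
    then have "(\<integral>y. g y \<partial>\<nu>) = ?L" by (simp add: LIMSEQ_const_iff)
    then show "(\<integral>y. g y \<partial>\<nu>) = (\<integral>y. g y \<partial>mu)" using integral_mu[OF gm] by simp
  qed
qed

end

context ifs begin

lemma Abar_nth: "Abar $ k $ l = (\<Sum>p\<in>UNIV. pmf P p * A p $ k $ l)"
  by (simp add: Abar_def)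

lemma Abar_mult: "Abar *v v = (\<Sum>p\<in>UNIV. pmf P p *\<^sub>R (A p *v v))"
proof -
  have "(Abar *v v) $ k = (\<Sum>p\<in>UNIV. pmf P p *\<^sub>R (A p *v v)) $ k" for k
  proof -
    have "(Abar *v v) $ k = (\<Sum>l\<in>UNIV. \<Sum>p\<in>UNIV. pmf P p * A p $ k $ l * v $ l)"
      by (simp add: matrix_vector_mult_def Abar_nth sum_distrib_right)
    also have "\<dots> = (\<Sum>p\<in>UNIV. \<Sum>l\<in>UNIV. pmf P p * A p $ k $ l * v $ l)"
      by (rule sum.swap)
    also have "\<dots> = (\<Sum>p\<in>UNIV. pmf P p *\<^sub>R (A p *v v)) $ k"
      by (simp add: matrix_vector_mult_def sum_distrib_left mult.assoc)
    finally show ?thesis .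
  qed
  then show ?thesis by (simp add: vec_eq_iff)
qed

lemma mean_F: "(\<Sum>p\<in>UNIV. pmf P p *\<^sub>R F p y) = Abar *v y + cbar"
  by (simp add: F_def Abar_mult cbar_def scaleR_add_right sum.distrib)

lemma Abar_box: assumes "inbox r v" shows "inbox (\<rho> * r) (Abar *v v)"
  unfolding inbox_def
proof
  fix k
  have r0: "0 \<le> r" using assms by (auto simp: inbox_def intro: order_trans[OF abs_ge_zero])
  have "\<bar>(Abar *v v) $ k\<bar> = \<bar>\<Sum>p\<in>UNIV. pmf P p * (A p *v v) $ k\<bar>" by (simp add: Abar_mult)
  also have "\<dots> \<le> (\<Sum>p\<in>UNIV. \<bar>pmf P p * (A p *v v) $ k\<bar>)" by (rule sum_abs)
  also have "\<dots> \<le> (\<Sum>p\<in>UNIV. pmf P p * ((\<Sum>l\<in>UNIV. A p $ k $ l) * r))"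
    by (intro sum_mono) (auto simp: abs_mult intro!: mult_left_mono Av_box[OF assms])
  also have "\<dots> = (\<Sum>p\<in>UNIV. pmf P p * (\<Sum>l\<in>UNIV. A p $ k $ l)) * r"
    by (simp add: sum_distrib_right mult.assoc)
  also have "\<dots> \<le> \<rho> * r" using Abar_rowsum[of k] r0 by (rule mult_right_mono)
  finally show "\<bar>(Abar *v v) $ k\<bar> \<le> \<rho> * r" .
qed

lemma inbox_Max: "inbox (Max (range (\<lambda>k. \<bar>v $ k\<bar>))) v"
  by (auto simp: inbox_def)

lemma invertible_IA: "invertible (mat 1 - Abar)"
proof -
  have "v = 0" if v: "(mat 1 - Abar) *v v = 0" for v
  proof -
    let ?m = "Max (range (\<lambda>k. \<bar>v $ k\<bar>))"
    have vA: "v = Abar *v v" using v by (simp add: matrix_vector_mult_diff_rdistrib)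
    have ib: "inbox (\<rho> * ?m) v" using Abar_box[OF inbox_Max[of v]] vA by simp
    have "?m \<in> range (\<lambda>k. \<bar>v $ k\<bar>)" by (rule Max_in) auto
    then obtain k0 where k0: "?m = \<bar>v $ k0\<bar>" by blast
    have "?m \<le> \<rho> * ?m" using ib unfolding inbox_def k0[symmetric] by (metis k0)
    moreover have "0 \<le> ?m" using k0 by simp
    ultimately have "?m \<le> 0" using rho_lt1
      by (metis mult_le_cancel_right1 not_le order_less_le)
    then have "\<bar>v $ k\<bar> \<le> 0" for k using inbox_Max[of v] unfolding inbox_def by (meson order_trans)
    then show ?thesis by (simp add: vec_eq_iff)
  qed
  then have "\<exists>B. B ** (mat 1 - Abar) = mat 1" using matrix_left_invertible_ker by blast
  then show ?thesis using invertible_left_inverse by blast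
qed

definition xhat :: "real^'n" where
  "xhat = matrix_inv (mat 1 - Abar) *v cbar"

lemma matrix_inv_props: "(mat 1 - Abar) ** matrix_inv (mat 1 - Abar) = mat 1 \<and> matrix_inv (mat 1 - Abar) ** (mat 1 - Abar) = mat 1"
  using invertible_IA unfolding invertible_def matrix_inv_def by (rule someI_ex)

lemma xhat_fix: "Abar *v xhat + cbar = xhat"
proof -
  have "(mat 1 - Abar) *v xhat = cbar"
    using matrix_inv_props unfolding xhat_def by (simp add: matrix_vector_mul_assoc)
  then show ?thesis by (simp add: matrix_vector_mult_diff_rdistrib algebra_simps)
qed

definition Lt :: "nat \<Rightarrow> real^'n \<Rightarrow> real^'n" where
  "Lt t = ((\<lambda>v. Abar *v v) ^^ t)"

lemma Lt_linear: "linear (Lt t)"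
proof (induction t)
  case 0 then show ?case by (simp add: Lt_def linear_id[unfolded id_def])
next
  case (Suc t)
  have "Lt (Suc t) = (\<lambda>v. Abar *v v) \<circ> Lt t" by (simp add: Lt_def)
  then show ?case using linear_compose[OF Suc matrix_vector_mul_linear[of Abar]] by (simp add: o_def)
qed

lemma Lt_box: "inbox r v \<Longrightarrow> inbox (\<rho> ^ t * r) (Lt t v)"
proof (induction t arbitrary: r v)
  case 0 then show ?case by (simp add: Lt_def)
next
  case (Suc t)
  have "Lt (Suc t) v = Lt t (Abar *v v)" by (simp add: Lt_def funpow_Suc_right del: funpow.simps)
  then show ?case using Suc.IH[OF Abar_box[OF Suc.prems]] by (simp add: mult.assoc mult.commute mult.left_commute)
qed

lemma Lt_tendsto: "(\<lambda>t. Lt t v) \<longlonglongrightarrow> 0"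
proof (rule vec_tendstoI)
  fix k
  let ?m = "Max (range (\<lambda>k. \<bar>v $ k\<bar>))"
  have b: "\<bar>Lt t v $ k\<bar> \<le> \<rho> ^ t * ?m" for t using Lt_box[OF inbox_Max[of v], of t] by (simp add: inbox_def)
  have "(\<lambda>t. \<rho> ^ t * ?m) \<longlonglongrightarrow> 0 * ?m"
    by (intro tendsto_mult tendsto_const LIMSEQ_power_zero) (use rho_nonneg rho_lt1 in auto)
  then have "(\<lambda>t. \<rho> ^ t * ?m) \<longlonglongrightarrow> 0" by simp
  then have "(\<lambda>t. Lt t v $ k) \<longlonglongrightarrow> 0"
    by (rule Lim_null_comparison[rotated]) (use b in auto)
  then show "(\<lambda>t. Lt t v $ k) \<longlonglongrightarrow> 0 $ k" by simp
qed

lemma fwd_bounded: "\<exists>R. R0 \<le> R \<and> (\<forall>t \<omega>. inbox R (fwd t y \<omega>))"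
proof -
  have "inbox (R0 + norm y) y" using R0_nonneg by (auto simp: inbox_def intro: order_trans[OF component_le_norm_cart])
  then show ?thesis using fwd_box[of "R0 + norm y"] by (intro exI[of _ "R0 + norm y"]) auto
qed

lemma inbox_norm: "inbox R (v::real^'n) \<Longrightarrow> norm v \<le> real CARD('n) * R"
proof -
  assume "inbox R v"
  then have "(\<Sum>i\<in>UNIV. \<bar>v $ i\<bar>) \<le> (\<Sum>i\<in>(UNIV::'n set). R)"
    using sum_mono[of UNIV "\<lambda>i. \<bar>v $ i\<bar>" "\<lambda>i. R"] unfolding inbox_def by blast
  then show ?thesis using norm_le_l1_cart[of v] by simp
qed

lemma fwd_int: "integrable Om (\<lambda>\<omega>. fwd t y \<omega>)"
proof -
  obtain R where R: "\<forall>t \<omega>. inbox R (fwd t y \<omega>)" using fwd_bounded by blast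
  show ?thesis by (rule bounded_integrable[OF fwd_meas, where B="real CARD('n) * R"]) (rule inbox_norm, use R in blast)
qed

lemma E_fwd_vec: "(\<integral>\<omega>. fwd t y \<omega> \<partial>Om) = xhat + Lt t (y - xhat)"
proof (induction t arbitrary: y)
  case 0
  interpret prob_space Om by (rule prob_Om)
  show ?case using prob_Om_UNIV by (simp add: Lt_def)
next
  case (Suc t)
  have "(\<integral>\<omega>. fwd (Suc t) y \<omega> \<partial>Om) = (\<Sum>p\<in>UNIV. pmf P p *\<^sub>R (\<integral>X. fwd (Suc t) y (p ## X) \<partial>Om))"
    by (rule HD[OF fwd_meas fwd_int])
  also have "\<dots> = (\<Sum>p\<in>UNIV. pmf P p *\<^sub>R (xhat + Lt t (F p y - xhat)))" using Suc by simp
  also have "\<dots> = (\<Sum>p\<in>UNIV. pmf P p *\<^sub>R xhat) + Lt t (\<Sum>p\<in>UNIV. pmf P p *\<^sub>R (F p y - xhat))"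
    using Lt_linear[of t] by (simp add: scaleR_add_right sum.distrib linear_sum linear_scale)
  also have "(\<Sum>p\<in>UNIV. pmf P p *\<^sub>R xhat) = xhat" by (simp add: scaleR_sum_left[symmetric] sum_pmf)
  also have "(\<Sum>p\<in>UNIV. pmf P p *\<^sub>R (F p y - xhat)) = Abar *v y + cbar - xhat"
    by (simp add: scaleR_diff_right sum_subtractf mean_F scaleR_sum_left[symmetric] sum_pmf)
  also have "Abar *v y + cbar - xhat = Abar *v (y - xhat)"
    using xhat_fix by (simp add: matrix_vector_mult_diff_distrib algebra_simps)
  also have "Lt t (Abar *v (y - xhat)) = Lt (Suc t) (y - xhat)"
    by (simp add: Lt_def funpow_Suc_right del: funpow.simps)
  finally show ?case .
qed

lemma E_fwd_tendsto: "(\<lambda>t. \<integral>\<omega>. fwd t y \<omega> \<partial>Om) \<longlonglongrightarrow> xhat"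
  unfolding E_fwd_vec using tendsto_add[OF tendsto_const Lt_tendsto, of xhat "y - xhat"] by simp

end

lemma incr_bound:
  fixes a :: "nat \<Rightarrow> real"
  assumes inc: "\<And>t. \<bar>a (Suc t) - a t\<bar> \<le> B"
  shows "s \<le> t \<Longrightarrow> \<bar>a t - a s\<bar> \<le> B * real (t - s)"
proof (induction t)
  case 0 then show ?case by simp
next
  case (Suc t)
  show ?case
  proof (cases "s \<le> t")
    case True
    have "\<bar>a (Suc t) - a s\<bar> \<le> \<bar>a (Suc t) - a t\<bar> + \<bar>a t - a s\<bar>" by linarith
    also have "\<dots> \<le> B + B * real (t - s)" using inc Suc.IH[OF True] by (intro add_mono) auto
    also have "\<dots> = B * real (Suc t - s)" using True by (simp add: Suc_diff_le algebra_simps)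
    finally show ?thesis .
  next
    case False
    then have "s = Suc t" using Suc.prems by simp
    then show ?thesis by simp
  qed
qed

lemma isqrt_ex: "\<exists>q::nat. q^2 \<le> t \<and> t < (Suc q)^2"
proof (induction t)
  case 0 then show ?case by (intro exI[of _ 0]) simp
next
  case (Suc t)
  then obtain q where q: "q^2 \<le> t" "t < (Suc q)^2" by blast
  show ?case
  proof (cases "Suc t < (Suc q)^2")
    case True then show ?thesis using q by (intro exI[of _ q]) simp
  next
    case False
    then have "Suc t = (Suc q)^2" using q(2) by simp
    then show ?thesis by (intro exI[of _ "Suc q"]) (simp add: power2_eq_square)
  qed
qed

lemma avg_to_zero:
  fixes a :: "nat \<Rightarrow> real"
  assumes inc: "\<And>t. \<bar>a (Suc t) - a t\<bar> \<le> B"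
    and ev: "\<And>e. e > 0 \<Longrightarrow> eventually (\<lambda>q. \<bar>a (q^2)\<bar> \<le> e * real (q^2)) sequentially"
  shows "(\<lambda>t. a t / real t) \<longlonglongrightarrow> 0"
proof (rule LIMSEQ_I)
  fix r :: real assume r: "0 < r"
  have B0: "0 \<le> B" using inc[of 0] by linarith
  obtain N1 where N1: "\<And>q. q \<ge> N1 \<Longrightarrow> \<bar>a (q^2)\<bar> \<le> (r/2) * real (q^2)"
    using ev[of "r/2"] r unfolding eventually_sequentially by auto
  define N where "N = max (max N1 (nat \<lceil>4 * B / r\<rceil> + 1)) 1"
  show "\<exists>no. \<forall>n\<ge>no. norm (a n / real n - 0) < r"
  proof (intro exI allI impI)
    fix t assume t: "N^2 \<le> t"
    obtain q where qt: "q^2 \<le> t" and tq: "t < (Suc q)^2" using isqrt_ex by blast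
    have qN: "N \<le> q"
    proof (rule ccontr)
      assume "\<not> N \<le> q"
      then have "Suc q \<le> N" by simp
      then have "(Suc q)^2 \<le> N^2" by (rule power_mono) simp
      then show False using t tq by linarith
    qed
    have q1: "1 \<le> q" "N1 \<le> q" "nat \<lceil>4 * B / r\<rceil> + 1 \<le> q" using qN by (auto simp: N_def)
    have d: "t - q^2 \<le> 2 * q" using tq qt by (simp add: power2_eq_square)
    have "4 * B / r < real q"
    proof -
      have "4 * B / r \<le> real (nat \<lceil>4 * B / r\<rceil>)" by linarith
      then show ?thesis using q1(3) by linarith
    qed
    then have Bq: "2 * B / real q < r / 2" using r q1(1) by (simp add: field_simps)
    have qpos: "0 < real q" using q1(1) by simp
    have "\<bar>a t\<bar> \<le> \<bar>a (q^2)\<bar> + \<bar>a t - a (q^2)\<bar>" by linarith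
    also have "\<dots> \<le> (r/2) * real (q^2) + B * real (t - q^2)"
      using N1[OF q1(2)] incr_bound[where a=a and B=B, OF inc qt] by (intro add_mono) auto
    also have "\<dots> \<le> (r/2) * real (q^2) + B * (2 * real q)"
      using d B0 r by (intro add_mono mult_left_mono) (auto simp del: of_nat_diff)
    finally have at: "\<bar>a t\<bar> \<le> (r/2) * real (q^2) + 2 * B * real q" by simp
    have tpos: "real (q^2) \<le> real t" using qt by linarith
    have q2pos: "0 < real (q^2)" using qpos by simp
    have "\<bar>a t\<bar> / real t \<le> ((r/2) * real (q^2) + 2 * B * real q) / real (q^2)"
    proof -
      have "\<bar>a t\<bar> / real t \<le> ((r/2) * real (q^2) + 2 * B * real q) / real t"
        using at tpos q2pos by (intro divide_right_mono) auto
      also have "\<dots> \<le> ((r/2) * real (q^2) + 2 * B * real q) / real (q^2)"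
      proof (rule divide_left_mono)
        show "real (q^2) \<le> real t" by (rule tpos)
        show "0 \<le> (r/2) * real (q^2) + 2 * B * real q" using B0 r by simp
        show "0 < real t * real (q^2)" using tpos q2pos by (intro mult_pos_pos) linarith+
      qed
      finally show ?thesis .
    qed
    also have "\<dots> = r/2 + 2 * B / real q" using qpos by (simp add: field_simps power2_eq_square)
    also have "\<dots> < r" using Bq by simp
    finally show "norm (a t / real t - 0) < r" by simp
  qed
qed



context ifs begin

definition Dm :: "'p \<Rightarrow> real^'n \<Rightarrow> real^'n" where
  "Dm p z = F p z - (Abar *v z + cbar)"

definition Mt :: "nat \<Rightarrow> real^'n \<Rightarrow> 'p stream \<Rightarrow> real^'n" where
  "Mt t y \<omega> = (\<Sum>i<t. Dm (\<omega> !! i) (fwd i y \<omega>))"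

definition St :: "nat \<Rightarrow> real^'n \<Rightarrow> 'p stream \<Rightarrow> real^'n" where
  "St t y \<omega> = (\<Sum>i<t. fwd i y \<omega>)"

lemma fwd_tail: "fwd (Suc i) y \<omega> = F (\<omega> !! i) (fwd i y \<omega>)"
  by (induction i arbitrary: y \<omega>) auto

lemma St_identity:
  "(mat 1 - Abar) *v St t y \<omega> = real t *\<^sub>R cbar + y - fwd t y \<omega> + Mt t y \<omega>"
proof (induction t)
  case 0 then show ?case by (simp add: St_def Mt_def)
next
  case (Suc t)
  have "(mat 1 - Abar) *v St (Suc t) y \<omega> = (mat 1 - Abar) *v St t y \<omega> + (fwd t y \<omega> - Abar *v fwd t y \<omega>)"
    by (simp add: St_def matrix_vector_right_distrib matrix_vector_mult_diff_rdistrib)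
  also have "\<dots> = real (Suc t) *\<^sub>R cbar + y - fwd (Suc t) y \<omega> + Mt (Suc t) y \<omega>"
    unfolding Suc.IH by (simp add: Mt_def fwd_tail Dm_def algebra_simps del: fwd.simps)
  finally show ?case .
qed

lemma Mt_head: "Mt (Suc t) y \<omega> = Dm (shd \<omega>) y + Mt t (F (shd \<omega>) y) (stl \<omega>)"
  unfolding Mt_def by (subst sum.lessThan_Suc_shift) simp

lemma Dm_meas: "Dm p \<in> borel_measurable borel"
proof -
  have "continuous_on UNIV (Dm p)"
  proof -
    have "Dm p = (\<lambda>z. F p z - (Abar *v z + cbar))" by (auto simp: Dm_def)
    then show ?thesis
      by (simp add: continuous_on_diff continuous_on_add continuous_on_const F_cont
          matrix_vector_mult_linear_continuous_on)
  qed
  then show ?thesis by (rule borel_measurable_continuous_onI)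
qed

lemma Mt_meas: "(\<lambda>\<omega>. Mt t y \<omega>) \<in> borel_measurable Om"
proof -
  have "(\<lambda>\<omega>. Dm (\<omega> !! i) (fwd i y \<omega>)) \<in> borel_measurable Om" for i
  proof -
    have "(\<lambda>\<omega>. Dm p (fwd i y \<omega>)) \<in> borel_measurable Om" for p
      using measurable_compose[OF fwd_meas Dm_meas] .
    then show ?thesis using meas_by_snth[where f="\<lambda>p \<omega>. Dm p (fwd i y \<omega>)"] by simp
  qed
  then show ?thesis unfolding Mt_def by (intro borel_measurable_sum) auto
qed

lemma mean_box: "R0 \<le> R \<Longrightarrow> inbox R z \<Longrightarrow> inbox R (Abar *v z + cbar)"
proof -
  assume R: "R0 \<le> R" "inbox R z"
  show ?thesis unfolding inbox_def
  proof
    fix k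
    have "\<bar>(Abar *v z + cbar) $ k\<bar> = \<bar>\<Sum>p\<in>UNIV. pmf P p * F p z $ k\<bar>"
      by (simp add: mean_F[symmetric])
    also have "\<dots> \<le> (\<Sum>p\<in>UNIV. \<bar>pmf P p * F p z $ k\<bar>)" by (rule sum_abs)
    also have "\<dots> \<le> (\<Sum>p\<in>UNIV. pmf P p * R)"
      using F_box[OF R] by (intro sum_mono) (auto simp: abs_mult inbox_def intro!: mult_left_mono)
    also have "\<dots> = R" by (simp add: sum_distrib_right[symmetric] sum_pmf)
    finally show "\<bar>(Abar *v z + cbar) $ k\<bar> \<le> R" .
  qed
qed

lemma Dm_bound: "R0 \<le> R \<Longrightarrow> inbox R z \<Longrightarrow> \<bar>Dm p z $ k\<bar> \<le> 2 * R"
  using F_box[of R z p] mean_box[of R z] unfolding inbox_def Dm_def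
  by (smt (verit) vector_minus_component)

lemma Mt_bound: "R0 \<le> R \<Longrightarrow> inbox R y \<Longrightarrow> \<bar>Mt t y \<omega> $ k\<bar> \<le> real t * (2 * R)"
proof -
  assume R: "R0 \<le> R" "inbox R y"
  have "\<bar>Mt t y \<omega> $ k\<bar> \<le> (\<Sum>i<t. \<bar>Dm (\<omega> !! i) (fwd i y \<omega>) $ k\<bar>)"
    unfolding Mt_def by (simp add: sum_abs)
  also have "\<dots> \<le> (\<Sum>i<t. 2 * R)" by (intro sum_mono Dm_bound fwd_box R)
  finally show ?thesis by simp
qed

lemma Mt_int: "R0 \<le> R \<Longrightarrow> inbox R y \<Longrightarrow> integrable Om (\<lambda>\<omega>. Mt t y \<omega> $ k)"
  by (rule bounded_integrable[where B="real t * (2 * R)"]) (use Mt_meas Mt_bound in auto)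

lemma Mt_int2: "R0 \<le> R \<Longrightarrow> inbox R y \<Longrightarrow> integrable Om (\<lambda>\<omega>. (Mt t y \<omega> $ k)^2)"
proof -
  assume R: "R0 \<le> R" "inbox R y"
  show ?thesis
  proof (rule bounded_integrable[where B="(real t * (2 * R))^2"])
    show "(\<lambda>\<omega>. (Mt t y \<omega> $ k)^2) \<in> borel_measurable Om" using Mt_meas by measurable
    fix \<omega>
    have "\<bar>Mt t y \<omega> $ k\<bar>^2 \<le> (real t * (2 * R))^2"
      by (rule power_mono[OF Mt_bound[OF R]]) simp
    then show "norm ((Mt t y \<omega> $ k)^2) \<le> (real t * (2 * R))^2" by simp
  qed
qed

lemma sum_Dm: "(\<Sum>p\<in>UNIV. pmf P p * Dm p z $ k) = 0"
proof -
  have "(\<Sum>p\<in>UNIV. pmf P p *\<^sub>R Dm p z) = 0"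
    by (simp add: Dm_def scaleR_diff_right sum_subtractf mean_F scaleR_sum_left[symmetric] sum_pmf)
  then have "(\<Sum>p\<in>UNIV. pmf P p *\<^sub>R Dm p z) $ k = 0" by simp
  then show ?thesis by simp
qed

lemma E_Mt: "R0 \<le> R \<Longrightarrow> inbox R y \<Longrightarrow> (\<integral>\<omega>. Mt t y \<omega> $ k \<partial>Om) = 0"
proof (induction t arbitrary: y)
  case 0 then show ?case by (simp add: Mt_def)
next
  case (Suc t)
  have m: "(\<lambda>\<omega>. Mt (Suc t) y \<omega> $ k) \<in> borel_measurable Om" using Mt_meas by measurable
  have "(\<integral>\<omega>. Mt (Suc t) y \<omega> $ k \<partial>Om) = (\<Sum>p\<in>UNIV. pmf P p *\<^sub>R (\<integral>X. Mt (Suc t) y (p ## X) $ k \<partial>Om))"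
    by (rule HD[OF m Mt_int[OF Suc.prems]])
  also have "\<dots> = (\<Sum>p\<in>UNIV. pmf P p * (\<integral>X. Dm p y $ k + Mt t (F p y) X $ k \<partial>Om))"
    by (simp add: Mt_head)
  also have "\<dots> = (\<Sum>p\<in>UNIV. pmf P p * (Dm p y $ k + (\<integral>X. Mt t (F p y) X $ k \<partial>Om)))"
  proof -
    interpret prob_space Om by (rule prob_Om)
    have "(\<integral>X. Dm p y $ k + Mt t (F p y) X $ k \<partial>Om) = Dm p y $ k + (\<integral>X. Mt t (F p y) X $ k \<partial>Om)" for p
      using Mt_int[OF Suc.prems(1) F_box[OF Suc.prems]] prob_Om_UNIV by simp
    then show ?thesis by simp
  qed
  also have "\<dots> = (\<Sum>p\<in>UNIV. pmf P p * Dm p y $ k)"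
    using Suc.IH[OF Suc.prems(1) F_box[OF Suc.prems]] by simp
  also have "\<dots> = 0" by (rule sum_Dm)
  finally show ?case .
qed

lemma E_Mt2: "R0 \<le> R \<Longrightarrow> inbox R y \<Longrightarrow> (\<integral>\<omega>. (Mt t y \<omega> $ k)^2 \<partial>Om) \<le> real t * (2 * R)^2"
proof (induction t arbitrary: y)
  case 0 then show ?case by (simp add: Mt_def)
next
  case (Suc t)
  interpret prob_space Om by (rule prob_Om)
  note R = Suc.prems
  have m: "(\<lambda>\<omega>. (Mt (Suc t) y \<omega> $ k)^2) \<in> borel_measurable Om" using Mt_meas by measurable
  have "(\<integral>\<omega>. (Mt (Suc t) y \<omega> $ k)^2 \<partial>Om) = (\<Sum>p\<in>UNIV. pmf P p *\<^sub>R (\<integral>X. (Mt (Suc t) y (p ## X) $ k)^2 \<partial>Om))"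
    by (rule HD[OF m Mt_int2[OF R]])
  also have "\<dots> = (\<Sum>p\<in>UNIV. pmf P p * (\<integral>X. (Dm p y $ k + Mt t (F p y) X $ k)^2 \<partial>Om))"
    by (simp add: Mt_head)
  also have "\<dots> = (\<Sum>p\<in>UNIV. pmf P p * ((Dm p y $ k)^2 + 2 * Dm p y $ k * (\<integral>X. Mt t (F p y) X $ k \<partial>Om)
                      + (\<integral>X. (Mt t (F p y) X $ k)^2 \<partial>Om)))"
  proof -
    have "(\<integral>X. (Dm p y $ k + Mt t (F p y) X $ k)^2 \<partial>Om) =
          (Dm p y $ k)^2 + 2 * Dm p y $ k * (\<integral>X. Mt t (F p y) X $ k \<partial>Om) + (\<integral>X. (Mt t (F p y) X $ k)^2 \<partial>Om)" for p
    proof -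
      have i1: "integrable Om (\<lambda>X. Mt t (F p y) X $ k)" by (rule Mt_int[OF R(1) F_box[OF R]])
      have i2: "integrable Om (\<lambda>X. (Mt t (F p y) X $ k)^2)" by (rule Mt_int2[OF R(1) F_box[OF R]])
      have "(\<lambda>X. (Dm p y $ k + Mt t (F p y) X $ k)^2) =
            (\<lambda>X. ((Dm p y $ k)^2 + 2 * Dm p y $ k * Mt t (F p y) X $ k) + (Mt t (F p y) X $ k)^2)"
        by (auto simp: power2_sum)
      then show ?thesis using i1 i2 prob_Om_UNIV by simp
    qed
    then show ?thesis by simp
  qed
  also have "\<dots> \<le> (\<Sum>p\<in>UNIV. pmf P p * ((2 * R)^2 + 0 + real t * (2 * R)^2))"
  proof (intro sum_mono mult_left_mono add_mono)
    fix p
    have "\<bar>Dm p y $ k\<bar> \<le> 2 * R" by (rule Dm_bound[OF R])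
    then show "(Dm p y $ k)^2 \<le> (2 * R)^2"
      by (metis abs_le_square_iff abs_of_nonneg abs_ge_zero order_trans)
    show "2 * Dm p y $ k * (\<integral>X. Mt t (F p y) X $ k \<partial>Om) \<le> 0"
      using E_Mt[OF R(1) F_box[OF R]] by simp
    show "(\<integral>X. (Mt t (F p y) X $ k)^2 \<partial>Om) \<le> real t * (2 * R)^2"
      by (rule Suc.IH[OF R(1) F_box[OF R]])
  qed auto
  also have "\<dots> = real (Suc t) * (2 * R)^2"
    by (simp only: sum_distrib_right[symmetric] sum_pmf) (simp add: algebra_simps)
  finally show ?case by simp
qed

end

context ifs begin

lemma AE_Mt_sq:
  assumes R: "R0 \<le> R" "inbox R y" and e: "0 < e"
  shows "AE \<omega> in Om. eventually (\<lambda>q. \<bar>Mt (q^2) y \<omega> $ k\<bar> \<le> e * real (q^2)) sequentially"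
proof -
  interpret prob_space Om by (rule prob_Om)
  define A where "A m = {\<omega> \<in> space Om. e * real ((Suc m)^2) \<le> \<bar>Mt ((Suc m)^2) y \<omega> $ k\<bar>}" for m
  have Am[measurable]: "A m \<in> sets Om" for m
  proof -
    have [measurable]: "(\<lambda>\<omega>. Mt t y \<omega> $ k) \<in> borel_measurable Om" for t using Mt_meas by measurable
    show ?thesis unfolding A_def by measurable
  qed
  have R0': "0 \<le> R" using R R0_nonneg by simp
  have mA: "measure Om (A m) \<le> (2 * R)^2 / e^2 * inverse (real (Suc m) ^ 2)" for m
  proof -
    let ?a = "e * real ((Suc m)^2)"
    have a0: "0 < ?a" using e by simp
    have "measure Om (A m) \<le> (\<integral>\<omega>. (Mt ((Suc m)^2) y \<omega> $ k)^2 \<partial>Om) / ?a^2"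
      unfolding A_def
      by (rule second_moment_method[OF _ Mt_int2[OF R] a0]) (use Mt_meas in measurable)
    also have "\<dots> \<le> (real ((Suc m)^2) * (2 * R)^2) / ?a^2"
      by (intro divide_right_mono E_Mt2[OF R]) simp
    also have "\<dots> = (2 * R)^2 / e^2 * inverse (real (Suc m) ^ 2)"
    proof -
      define s where "s = real (Suc m)"
      have s: "0 < s" by (simp add: s_def)
      have "(real ((Suc m)^2) * (2 * R)^2) / ?a^2 = (s^2 * (2 * R)^2) / (e * s^2)^2"
        by (simp add: s_def)
      also have "\<dots> = (2 * R)^2 / e^2 * inverse (s ^ 2)"
        using e s by (simp add: field_simps power2_eq_square)
      finally show ?thesis by (simp add: s_def)
    qed
    finally show ?thesis .
  qed
  have sm: "summable (\<lambda>m. (2 * R)^2 / e^2 * inverse (real (Suc m) ^ 2))"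
  proof -
    have "summable (\<lambda>m. inverse (real m ^ 2))" by (rule inverse_power_summable) simp
    then have "summable (\<lambda>m. inverse (real (Suc m) ^ 2))"
      using summable_Suc_iff[where f="\<lambda>m. inverse (real m ^ 2)"] by simp
    then show ?thesis by (rule summable_mult)
  qed
  have "summable (\<lambda>m. measure Om (A m))"
    by (rule summable_comparison_test'[OF sm]) (use mA in auto)
  then have "AE \<omega> in Om. eventually (\<lambda>m. \<omega> \<in> space Om - A m) sequentially"
    by (intro borel_cantelli_AE1) (auto simp: Am emeasure_eq_measure)
  then show ?thesis
  proof eventually_elim
    case (elim \<omega>)
    then have "eventually (\<lambda>m. \<bar>Mt ((Suc m)^2) y \<omega> $ k\<bar> \<le> e * real ((Suc m)^2)) sequentially"
      by (rule eventually_mono) (auto simp: A_def)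
    then show ?case
      using eventually_sequentially_Suc[where P="\<lambda>q. \<bar>Mt (q^2) y \<omega> $ k\<bar> \<le> e * real (q^2)"]
      by (simp only:)
  qed
qed

lemma AE_Mt_avg:
  assumes R: "R0 \<le> R" "inbox R y"
  shows "AE \<omega> in Om. \<forall>k. (\<lambda>t. Mt t y \<omega> $ k / real t) \<longlonglongrightarrow> 0"
proof -
  have "AE \<omega> in Om. \<forall>k\<in>UNIV. (\<lambda>t. Mt t y \<omega> $ k / real t) \<longlonglongrightarrow> 0"
  proof (rule AE_finite_allI)
    show "finite (UNIV :: 'n set)" by simp
  next
    fix k
    have "AE \<omega> in Om. \<forall>j::nat. eventually (\<lambda>q. \<bar>Mt (q^2) y \<omega> $ k\<bar> \<le> inverse (real (Suc j)) * real (q^2)) sequentially"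
      unfolding AE_all_countable by (intro allI AE_Mt_sq[OF R]) simp
    then show "AE \<omega> in Om. (\<lambda>t. Mt t y \<omega> $ k / real t) \<longlonglongrightarrow> 0"
    proof eventually_elim
      case (elim \<omega>)
      show ?case
      proof (rule avg_to_zero[where B="2 * R"])
        fix t
        show "\<bar>Mt (Suc t) y \<omega> $ k - Mt t y \<omega> $ k\<bar> \<le> 2 * R"
          by (simp add: Mt_def Dm_bound[OF R(1) fwd_box[OF R]])
      next
        fix e :: real assume e: "0 < e"
        obtain j where j: "0 < j" "inverse (real j) < e" using ex_inverse_of_nat_less[OF e] by blast
        obtain j' where j': "j = Suc j'" using j(1) by (cases j) auto
        show "eventually (\<lambda>q. \<bar>Mt (q^2) y \<omega> $ k\<bar> \<le> e * real (q^2)) sequentially"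
          using elim[rule_format, of j']
        proof (rule eventually_mono)
          fix q assume "\<bar>Mt (q^2) y \<omega> $ k\<bar> \<le> inverse (real (Suc j')) * real (q^2)"
          moreover have "inverse (real (Suc j')) * real (q^2) \<le> e * real (q^2)"
            using j j' by (intro mult_right_mono) auto
          ultimately show "\<bar>Mt (q^2) y \<omega> $ k\<bar> \<le> e * real (q^2)" by linarith
        qed
      qed
    qed
  qed
  then show ?thesis by simp
qed

lemma AE_avg:
  "AE \<omega> in Om. (\<lambda>t. (1 / real t) *\<^sub>R St t y \<omega>) \<longlonglongrightarrow> xhat"
proof -
  obtain R where R: "R0 \<le> R" "inbox R y"
  proof -
    have "inbox (R0 + norm y) y" using R0_nonneg
      by (auto simp: inbox_def intro: order_trans[OF component_le_norm_cart])
    then show ?thesis using that[of "R0 + norm y"] R0_nonneg by simp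
  qed
  let ?Mi = "matrix_inv (mat 1 - Abar)"
  show ?thesis
    using AE_Mt_avg[OF R]
  proof eventually_elim
    case (elim \<omega>)
    define W where "W t = (1 / real t) *\<^sub>R (y - fwd t y \<omega>) + (1 / real t) *\<^sub>R Mt t y \<omega>" for t
    have W0: "(\<lambda>t. W t) \<longlonglongrightarrow> 0"
    proof (rule vec_tendstoI)
      fix k
      have b: "\<bar>(y - fwd t y \<omega>) $ k\<bar> \<le> 2 * R" for t
      proof -
        have h1: "\<bar>y $ k\<bar> \<le> R" using R(2) by (simp add: inbox_def)
        have h2: "\<bar>fwd t y \<omega> $ k\<bar> \<le> R" using fwd_box[OF R, of t \<omega>] by (simp add: inbox_def)
        show ?thesis using h1 h2 by simp
      qed
      have ev: "norm ((y - fwd t y \<omega>) $ k / real t) \<le> 2 * R * (1 / real t)" for t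
      proof -
        have "\<bar>(y - fwd t y \<omega>) $ k\<bar> / real t \<le> (2 * R) / real t"
          by (rule divide_right_mono[OF b]) simp
        then show ?thesis by (simp add: abs_divide)
      qed
      have "(\<lambda>t. 2 * R * (1 / real t)) \<longlonglongrightarrow> 2 * R * 0"
        by (intro tendsto_mult tendsto_const lim_inverse_n')
      then have g0: "(\<lambda>t. 2 * R * (1 / real t)) \<longlonglongrightarrow> 0" by simp
      have "(\<lambda>t. (y - fwd t y \<omega>) $ k / real t) \<longlonglongrightarrow> 0"
        by (rule Lim_null_comparison[OF always_eventually[OF allI[OF ev]] g0])
      then have "(\<lambda>t. (y - fwd t y \<omega>) $ k / real t + Mt t y \<omega> $ k / real t) \<longlonglongrightarrow> 0 + 0"
        using elim by (intro tendsto_add) auto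
      then show "(\<lambda>t. W t $ k) \<longlonglongrightarrow> 0 $ k" by (simp add: W_def)
    qed
    have "(\<lambda>t. ?Mi *v (cbar + W t)) \<longlonglongrightarrow> ?Mi *v (cbar + 0)"
      by (intro isCont_tendsto_compose[OF matrix_vector_mult_linear_continuous_at] tendsto_add tendsto_const W0)
    then have lim: "(\<lambda>t. ?Mi *v (cbar + W t)) \<longlonglongrightarrow> xhat" by (simp add: xhat_def)
    have eq: "(1 / real t) *\<^sub>R St t y \<omega> = ?Mi *v (cbar + W t)" if t: "t \<ge> 1" for t
    proof -
      have "St t y \<omega> = ?Mi *v ((mat 1 - Abar) *v St t y \<omega>)"
        using matrix_inv_props by (simp add: matrix_vector_mul_assoc)
      also have "\<dots> = ?Mi *v (real t *\<^sub>R cbar + y - fwd t y \<omega> + Mt t y \<omega>)" by (simp add: St_identity)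
      finally have "(1 / real t) *\<^sub>R St t y \<omega> = ?Mi *v ((1 / real t) *\<^sub>R (real t *\<^sub>R cbar + y - fwd t y \<omega> + Mt t y \<omega>))"
        by (simp add: matrix_vector_mult_scaleR[symmetric])
      also have "(1 / real t) *\<^sub>R (real t *\<^sub>R cbar + y - fwd t y \<omega> + Mt t y \<omega>) = cbar + W t"
        using t by (simp add: W_def scaleR_add_right scaleR_diff_right algebra_simps)
      finally show ?thesis .
    qed
    show ?case
      by (rule Lim_transform_eventually[OF lim]) (auto simp: eq eventually_sequentially intro!: exI[of _ 1])
  qed
qed

end

lemma sum_UNIV_Plus:
  "(\<Sum>b\<in>(UNIV::('a::finite + 'b::finite) set). f b) = (\<Sum>l\<in>UNIV. f (Inl l)) + (\<Sum>s\<in>UNIV. f (Inr s))"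
  using sum.Plus[of "UNIV::'a set" "UNIV::'b set" f] by (simp add: o_def)

lemma ev_nth: "ev i $ a = (if a = i then 1 else 0)"
  by (simp add: ev_def axis_def)

lemma Rmat_entry:
  "Rmat i j $ a $ b =
    (if is_reg i \<and> is_reg j then (if a = b then 1 else 0) - 1/2 * ((ev i $ a - ev j $ a) * (ev i $ b - ev j $ b))
     else if is_reg i \<and> \<not> is_reg j then (if a = b then 1 else 0) - 1/2 * (ev i $ a * (ev i $ b - ev j $ b))
     else if \<not> is_reg i \<and> is_reg j then (if a = b then 1 else 0) - 1/2 * (ev j $ a * (ev j $ b - ev i $ b))
     else (if a = b then 1 else 0))"
  by (simp add: Rmat_def outer_def mat_def)

lemma Rmat_nonneg: "Rmat i j $ a $ b \<ge> 0"
  unfolding Rmat_entry ev_nth by auto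

lemma sum_ev: "(\<Sum>b\<in>UNIV. ev i $ b) = 1"
  by (simp add: ev_nth)

lemma Rmat_rowsum: "(\<Sum>b\<in>UNIV. Rmat i j $ a $ b) = 1"
proof -
  have d: "(\<Sum>b\<in>UNIV. (if a = b then 1 else 0 :: real)) = 1" by simp
  have z: "(\<Sum>b\<in>UNIV. c * (x * (ev i' $ b - ev j' $ b))) = 0" for c x :: real and i' j' :: "'a + 'b"
    by (simp add: sum_distrib_left[symmetric] sum_subtractf sum_ev)
  have z2: "(\<Sum>b\<in>UNIV. x * (ev i' $ b - ev j' $ b) / 2) = 0" for x :: real and i' j' :: "'a + 'b"
  proof -
    have "(\<Sum>b\<in>UNIV. x * (ev i' $ b - ev j' $ b) / 2) = (\<Sum>b\<in>UNIV. (x / 2) * (ev i' $ b - ev j' $ b))"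
      by (intro sum.cong) auto
    also have "\<dots> = (x / 2) * (\<Sum>b\<in>UNIV. (ev i' $ b - ev j' $ b))" by (rule sum_distrib_left[symmetric])
    also have "\<dots> = 0" by (simp only: sum_subtractf sum_ev) simp
    finally show ?thesis .
  qed
  show ?thesis
    by (cases "is_reg i"; cases "is_reg j") (simp_all add: Rmat_entry sum_subtractf d z z2)
qed

lemma Rmat_stub_row: "Rmat i j $ Inr s $ b = (if b = Inr s then 1 else 0)"
  by (cases i; cases j) (auto simp: Rmat_entry ev_nth)

lemma Rmat_half: "Rmat (Inl k) (Inr s) $ Inl k $ Inr s = 1/2"
  by (simp add: Rmat_entry ev_nth)

lemma reg_part_mult: "reg_part (R *v z) = Amat R *v reg_part z + Bmat R *v stub_part z"
  by (simp add: vec_eq_iff reg_part_def stub_part_def Amat_def Bmat_def matrix_vector_mult_def sum_UNIV_Plus)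

lemma stub_part_mult: "stub_part (Rmat i j *v z) = stub_part z"
proof -
  have "(\<Sum>b\<in>UNIV. Rmat i j $ Inr s $ b * z $ b) = z $ Inr s" for s
  proof -
    have "(\<Sum>b\<in>UNIV. Rmat i j $ Inr s $ b * z $ b) = (\<Sum>b\<in>UNIV. if b = Inr s then z $ b else 0)"
      by (intro sum.cong) (auto simp: Rmat_stub_row)
    then show ?thesis by simp
  qed
  then show ?thesis by (simp add: vec_eq_iff stub_part_def matrix_vector_mult_def)
qed

lemma AB_rowsum:
  "(\<Sum>l\<in>UNIV. Amat (Rmat i j) $ k $ l) + (\<Sum>s\<in>UNIV. Bmat (Rmat i j) $ k $ s) = 1"
  using Rmat_rowsum[of i j "Inl k"] by (simp add: Amat_def Bmat_def sum_UNIV_Plus)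

lemma sum_scaleR_mv:
  fixes M :: "'p \<Rightarrow> real^'m^'n"
  shows "(\<Sum>p\<in>S. a p *\<^sub>R M p) *v v = (\<Sum>p\<in>S. a p *\<^sub>R (M p *v v))"
proof (cases "finite S")
  case True then show ?thesis
    by (induction S rule: finite_induct) (simp_all add: matrix_vector_mult_add_rdistrib scaleR_matrix_vector_assoc)
next
  case False then show ?thesis by simp
qed


theorem theorem2:
  fixes c1 :: "('r::finite + 's::finite) set"
    and ws wd :: real
    and P :: "(('r + 's) \<times> ('r + 's)) pmf"
    and x0 :: "real^('r + 's)"
  assumes nr1_pos: "\<exists>k. Inl k \<in> c1"
    and nr2_pos: "\<exists>k. Inl k \<notin> c1"
    and ws_pos: "ws > 0" and wd_pos: "wd > 0" and ws_ne_wd: "ws \<noteq> wd"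
    and wsum: "ws * (real (card c1) ^ 2 + real (card (UNIV - c1)) ^ 2)
               + 2 * wd * real (card c1) * real (card (UNIV - c1)) = 1"
    and P_def: "\<And>i j. pmf P (i, j) = wgt c1 ws wd i j"
  defines "\<Omega> \<equiv> stream_space (measure_pmf P)"
    and "xr \<equiv> (\<lambda>t \<omega>. reg_part (xproc x0 \<omega> t))"
    and "Abar \<equiv> measure_pmf.expectation P (\<lambda>p. Amat (Rmat (fst p) (snd p)))"
    and "Bbar \<equiv> measure_pmf.expectation P (\<lambda>p. Bmat (Rmat (fst p) (snd p)))"
    and "F \<equiv> (\<lambda>p y. Amat (Rmat (fst p) (snd p)) *v y + Bmat (Rmat (fst p) (snd p)) *v stub_part x0)"
  shows "(\<exists>\<mu>. invariant_distr P F \<mu> \<and> (\<forall>\<nu>. invariant_distr P F \<nu> \<longrightarrow> \<nu> = \<mu>)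
              \<and> conv_in_distr \<Omega> xr \<mu>)
         \<and> invertible (mat 1 - Abar)
         \<and> (\<lambda>t. \<integral>\<omega>. xr t \<omega> \<partial>\<Omega>) \<longlonglongrightarrow> matrix_inv (mat 1 - Abar) *v (Bbar *v stub_part x0)
         \<and> (AE \<omega> in \<Omega>. (\<lambda>t. (1 / real t) *\<^sub>R (\<Sum>i<t. xr i \<omega>)) \<longlonglongrightarrow> matrix_inv (mat 1 - Abar) *v (Bbar *v stub_part x0))"
proof -
  define A where "A p = Amat (Rmat (fst p) (snd p))" for p :: "('r + 's) \<times> ('r + 's)"
  define Bm where "Bm p = Bmat (Rmat (fst p) (snd p))" for p :: "('r + 's) \<times> ('r + 's)"
  define xs where "xs = stub_part x0"
  define c where "c p = Bm p *v xs" for p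
  define R0 where "R0 = norm xs"
  define \<rho> where "\<rho> = 1 - min ws wd / 2"
  have rowAB: "(\<Sum>l\<in>UNIV. A p $ k $ l) + (\<Sum>s\<in>UNIV. Bm p $ k $ s) = 1" for p k
    unfolding A_def Bm_def by (rule AB_rowsum)
  have Bnn: "0 \<le> Bm p $ k $ s" for p k s by (simp add: Bm_def Bmat_def Rmat_nonneg)
  have Ann: "0 \<le> A p $ k $ l" for p k l by (simp add: A_def Amat_def Rmat_nonneg)
  have sB: "0 \<le> (\<Sum>s\<in>UNIV. Bm p $ k $ s)" for p k by (intro sum_nonneg Bnn)
  interpret I: ifs P A c R0 \<rho>
  proof
    show "0 \<le> A p $ k $ l" for p k l by (rule Ann)
    show "(\<Sum>l\<in>UNIV. A p $ k $ l) \<le> 1" for p k using rowAB[of p k] sB[of p k] by linarith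
    show "\<bar>c p $ k\<bar> \<le> (1 - (\<Sum>l\<in>UNIV. A p $ k $ l)) * R0" for p k
    proof -
      have "\<bar>c p $ k\<bar> = \<bar>\<Sum>s\<in>UNIV. Bm p $ k $ s * xs $ s\<bar>" by (simp add: c_def matrix_vector_mult_def)
      also have "\<dots> \<le> (\<Sum>s\<in>UNIV. \<bar>Bm p $ k $ s * xs $ s\<bar>)" by (rule sum_abs)
      also have "\<dots> \<le> (\<Sum>s\<in>UNIV. Bm p $ k $ s * R0)"
        by (intro sum_mono) (auto simp: abs_mult Bnn R0_def component_le_norm_cart intro!: mult_left_mono)
      also have "\<dots> = (1 - (\<Sum>l\<in>UNIV. A p $ k $ l)) * R0"
        using rowAB[of p k] by (simp add: sum_distrib_right[symmetric])
      finally show ?thesis .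
    qed
    show "0 \<le> R0" by (simp add: R0_def)
    show "\<rho> < 1" using ws_pos wd_pos by (simp add: \<rho>_def)
    show "(\<Sum>p\<in>UNIV. pmf P p * (\<Sum>l\<in>UNIV. A p $ k $ l)) \<le> \<rho>" for k
    proof -
      obtain s0 :: 's where True by simp
      define p0 where "p0 = (Inl k :: 'r + 's, Inr s0 :: 'r + 's)"
      let ?rs = "\<lambda>p. (\<Sum>l\<in>UNIV. A p $ k $ l)"
      have h: "1/2 \<le> 1 - ?rs p0"
      proof -
        have "Bm p0 $ k $ s0 = 1/2" by (simp add: p0_def Bm_def Bmat_def Rmat_half)
        moreover have "Bm p0 $ k $ s0 \<le> (\<Sum>s\<in>UNIV. Bm p0 $ k $ s)"
          by (rule member_le_sum) (auto intro: Bnn)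
        ultimately show ?thesis using rowAB[of p0 k] by linarith
      qed
      have pw: "min ws wd \<le> pmf P p0" by (simp add: p0_def P_def wgt_def)
      have "(\<Sum>p\<in>UNIV. pmf P p * ?rs p) = (\<Sum>p\<in>UNIV. pmf P p) - (\<Sum>p\<in>UNIV. pmf P p * (1 - ?rs p))"
        by (simp add: sum_subtractf[symmetric] algebra_simps)
      also have "(\<Sum>p\<in>UNIV. pmf P p) = 1" using sum_pmf_eq_1[of UNIV P] by simp
      also have "pmf P p0 * (1 - ?rs p0) \<le> (\<Sum>p\<in>UNIV. pmf P p * (1 - ?rs p))"
        using rowAB sB by (intro member_le_sum mult_nonneg_nonneg) (auto simp: pmf_nonneg, smt (verit))
      then have "1 - (\<Sum>p\<in>UNIV. pmf P p * (1 - ?rs p)) \<le> 1 - pmf P p0 * (1 - ?rs p0)" by simp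
      also have "\<dots> \<le> 1 - min ws wd * (1/2)"
      proof -
        have "min ws wd * (1/2) \<le> pmf P p0 * (1 - ?rs p0)"
          using pw h ws_pos wd_pos by (intro mult_mono) auto
        then show ?thesis by simp
      qed
      finally show ?thesis by (simp add: \<rho>_def)
    qed
  qed
  have F_eq: "F = I.F" unfolding F_def by (simp add: fun_eq_iff I.F_def A_def c_def Bm_def xs_def)
  have Om_eq: "\<Omega> = I.Om" unfolding \<Omega>_def I.Om_def ..
  have xproc_fwd: "stub_part (xproc x0 \<omega> t) = xs \<and> reg_part (xproc x0 \<omega> t) = I.fwd t (reg_part x0) \<omega>" for \<omega> t
  proof (induction t)
    case 0 then show ?case by (simp add: xs_def)
  next
    case (Suc t)
    let ?p = "\<omega> !! t"
    have "reg_part (xproc x0 \<omega> (Suc t)) = A ?p *v reg_part (xproc x0 \<omega> t) + Bm ?p *v stub_part (xproc x0 \<omega> t)"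
      by (simp add: reg_part_mult A_def Bm_def)
    also have "\<dots> = I.fwd (Suc t) (reg_part x0) \<omega>"
      using Suc by (simp add: I.fwd_tail I.F_def c_def[symmetric] del: I.fwd.simps)
    finally show ?case using Suc by (simp add: stub_part_mult del: I.fwd.simps)
  qed
  have xr_eq: "xr = (\<lambda>t \<omega>. I.fwd t (reg_part x0) \<omega>)"
    unfolding xr_def using xproc_fwd by (simp add: fun_eq_iff)
  have Abar_eq: "Abar = I.Abar"
    unfolding Abar_def I.Abar_def A_def by (subst integral_measure_pmf[where A=UNIV]) auto
  have Bbar_eq: "Bbar *v stub_part x0 = I.cbar"
  proof -
    have "Bbar = (\<Sum>p\<in>UNIV. pmf P p *\<^sub>R Bm p)"
      unfolding Bbar_def Bm_def by (subst integral_measure_pmf[where A=UNIV]) auto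
    then show ?thesis by (simp add: I.cbar_def c_def xs_def sum_scaleR_mv)
  qed
  have lim_eq: "matrix_inv (mat 1 - Abar) *v (Bbar *v stub_part x0) = I.xhat"
    by (simp add: I.xhat_def Abar_eq Bbar_eq)
  show ?thesis
  proof (intro conjI)
    show "\<exists>\<mu>. invariant_distr P F \<mu> \<and> (\<forall>\<nu>. invariant_distr P F \<nu> \<longrightarrow> \<nu> = \<mu>) \<and> conv_in_distr \<Omega> xr \<mu>"
      unfolding F_eq Om_eq xr_eq using I.invariant_mu I.unique_mu I.conv_mu by blast
    show "invertible (mat 1 - Abar)" using I.invertible_IA by (simp add: Abar_eq)
    show "(\<lambda>t. \<integral>\<omega>. xr t \<omega> \<partial>\<Omega>) \<longlonglongrightarrow> matrix_inv (mat 1 - Abar) *v (Bbar *v stub_part x0)"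
      using I.E_fwd_tendsto[of "reg_part x0"] by (simp add: xr_eq Om_eq lim_eq)
    show "AE \<omega> in \<Omega>. (\<lambda>t. (1 / real t) *\<^sub>R (\<Sum>i<t. xr i \<omega>)) \<longlonglongrightarrow> matrix_inv (mat 1 - Abar) *v (Bbar *v stub_part x0)"
      unfolding Om_eq xr_eq lim_eq using I.AE_avg[of "reg_part x0"] by (simp add: I.St_def)
  qed
qed


end
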